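(* For each $n\ge 0$ there is an isomorphism of $A_n$-bimodules $$D_{n+1}\otimes_{A_{n+1}}X_n\cong A_n\oplus\big(X_{n-1}\otimes_{A_{n-1}}D_n\big),$$ where $A_n$ carries its standard bimodule structure, and for $n=0$ the second summand is interpreted as $0$.
   Context: $A_n$ is the nilCoxeter algebra: the unital $\mathbb{Q}$-algebra generated by $Y_1,\dots,Y_{n-1}$ with relations $Y_i^2=0$, $Y_iY_j=Y_jY_i$ for $|i-j|>1$, $Y_iY_{i+1}Y_i=Y_{i+1}Y_iY_{i+1}$ ($A_0=A_1=\mathbb{Q}$). Let $\chi_n:A_n\to A_{n+1}$, $\chi_n(Y_i)=Y_i$. $X_n$ is $A_{n+1}$ as an $(A_{n+1},A_n)$-bimodule (right action via $\chi_n$) and $D_{n+1}$ is $A_{n+1}$ as an $(A_n,A_{n+1})$-bimodule (left action via $\chi_n$). *)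

theory Defs
  imports Complex_Main
begin

section \<open>Free associative Q-algebra on generators Y_1, Y_2, ... (words = nat lists)\<close>

type_synonym fa = "nat list \<Rightarrow> rat"

definition fa_add :: "fa \<Rightarrow> fa \<Rightarrow> fa" where
  "fa_add f g = (\<lambda>w. f w + g w)"

definition fa_smul :: "rat \<Rightarrow> fa \<Rightarrow> fa" where
  "fa_smul c f = (\<lambda>w. c * f w)"

definition fa_mul :: "fa \<Rightarrow> fa \<Rightarrow> fa" where
  "fa_mul f g = (\<lambda>w. \<Sum>k\<le>length w. f (take k w) * g (drop k w))"

definition fa_mon :: "nat list \<Rightarrow> fa" where
  "fa_mon u = (\<lambda>w. if w = u then 1 else 0)"

definition fa_zero :: fa where "fa_zero = (\<lambda>w. 0)"

definition fa_one :: fa where "fa_one = fa_mon []"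

definition F :: "nat \<Rightarrow> fa set" where
  "F n = {f. finite {w. f w \<noteq> 0} \<and> (\<forall>w. f w \<noteq> 0 \<longrightarrow> set w \<subseteq> {1..<n})}"

definition nc_rels :: "nat \<Rightarrow> fa set" where
  "nc_rels n =
     {fa_mon [i, i] | i. i \<in> {1..<n}}
   \<union> {fa_add (fa_mon [i, j]) (fa_smul (-1) (fa_mon [j, i])) | i j.
        i \<in> {1..<n} \<and> j \<in> {1..<n} \<and> (i > j + 1 \<or> j > i + 1)}
   \<union> {fa_add (fa_mon [i, Suc i, i]) (fa_smul (-1) (fa_mon [Suc i, i, Suc i])) | i.
        i \<in> {1..<n} \<and> Suc i \<in> {1..<n}}"

inductive_set nc_ideal :: "nat \<Rightarrow> fa set" for n where
  zero: "fa_zero \<in> nc_ideal n"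
| step: "x \<in> nc_ideal n \<Longrightarrow> r \<in> nc_rels n \<Longrightarrow> set u \<subseteq> {1..<n} \<Longrightarrow> set v \<subseteq> {1..<n}
         \<Longrightarrow> fa_add x (fa_smul c (fa_mul (fa_mul (fa_mon u) r) (fa_mon v))) \<in> nc_ideal n"

definition nc_cls :: "nat \<Rightarrow> fa \<Rightarrow> fa set" where
  "nc_cls n f = {g \<in> F n. fa_add f (fa_smul (-1) g) \<in> nc_ideal n}"

definition rep :: "'a set \<Rightarrow> 'a" where
  "rep X = (SOME x. x \<in> X)"

record 'a alg =
  acarrier :: "'a set"
  aadd :: "'a \<Rightarrow> 'a \<Rightarrow> 'a"
  amul :: "'a \<Rightarrow> 'a \<Rightarrow> 'a"
  azero :: 'a
  aone :: 'a

definition nilcox :: "nat \<Rightarrow> fa set alg" where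
  "nilcox n = \<lparr> acarrier = nc_cls n ` F n,
               aadd = (\<lambda>X Y. nc_cls n (fa_add (rep X) (rep Y))),
               amul = (\<lambda>X Y. nc_cls n (fa_mul (rep X) (rep Y))),
               azero = nc_cls n fa_zero,
               aone = nc_cls n fa_one \<rparr>"

definition nc_chi :: "nat \<Rightarrow> fa set \<Rightarrow> fa set" where
  "nc_chi n X = nc_cls (Suc n) (rep X)"

record ('r, 's, 'm) bimod =
  mcarrier :: "'m set"
  madd :: "'m \<Rightarrow> 'm \<Rightarrow> 'm"
  mzero :: 'm
  lact :: "'r \<Rightarrow> 'm \<Rightarrow> 'm"
  ract :: "'m \<Rightarrow> 's \<Rightarrow> 'm"

definition regbimod :: "'a alg \<Rightarrow> ('r \<Rightarrow> 'a) \<Rightarrow> ('s \<Rightarrow> 'a) \<Rightarrow> ('r, 's, 'a) bimod" where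
  "regbimod A \<phi> \<psi> = \<lparr> mcarrier = acarrier A, madd = aadd A, mzero = azero A,
                      lact = (\<lambda>r a. amul A (\<phi> r) a), ract = (\<lambda>a s. amul A a (\<psi> s)) \<rparr>"

definition bimod_iso :: "'r alg \<Rightarrow> 's alg \<Rightarrow> ('r, 's, 'm) bimod \<Rightarrow> ('r, 's, 'n) bimod \<Rightarrow> bool" where
  "bimod_iso R S M N \<longleftrightarrow> (\<exists>f. bij_betw f (mcarrier M) (mcarrier N)
      \<and> (\<forall>x\<in>mcarrier M. \<forall>y\<in>mcarrier M. f (madd M x y) = madd N (f x) (f y))
      \<and> (\<forall>r\<in>acarrier R. \<forall>x\<in>mcarrier M. f (lact M r x) = lact N r (f x))
      \<and> (\<forall>s\<in>acarrier S. \<forall>x\<in>mcarrier M. f (ract M x s) = ract N (f x) s))"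

definition dsum :: "('r, 's, 'm) bimod \<Rightarrow> ('r, 's, 'n) bimod \<Rightarrow> ('r, 's, 'm \<times> 'n) bimod" where
  "dsum M N = \<lparr> mcarrier = mcarrier M \<times> mcarrier N,
               madd = (\<lambda>(x, y) (x', y'). (madd M x x', madd N y y')),
               mzero = (mzero M, mzero N),
               lact = (\<lambda>r (x, y). (lact M r x, lact N r y)),
               ract = (\<lambda>(x, y) s. (ract M x s, ract N y s)) \<rparr>"

definition zero_bimod :: "('r, 's, 'm) bimod" where
  "zero_bimod = \<lparr> mcarrier = {undefined}, madd = (\<lambda>_ _. undefined), mzero = undefined,
                  lact = (\<lambda>_ _. undefined), ract = (\<lambda>_ _. undefined) \<rparr>"

definition tz_delta :: "'m \<times> 'n \<Rightarrow> ('m \<times> 'n \<Rightarrow> int)" where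
  "tz_delta p = (\<lambda>q. if q = p then 1 else 0)"

definition tz_free :: "('r, 's, 'm) bimod \<Rightarrow> ('s, 't, 'n) bimod \<Rightarrow> ('m \<times> 'n \<Rightarrow> int) set" where
  "tz_free M N = {x. finite {p. x p \<noteq> 0} \<and> (\<forall>p. x p \<noteq> 0 \<longrightarrow> p \<in> mcarrier M \<times> mcarrier N)}"

definition tz_gens :: "('r, 's, 'm) bimod \<Rightarrow> 's alg \<Rightarrow> ('s, 't, 'n) bimod \<Rightarrow> ('m \<times> 'n \<Rightarrow> int) set" where
  "tz_gens M S N =
     {(\<lambda>q. tz_delta (madd M m m', n) q - tz_delta (m, n) q - tz_delta (m', n) q) | m m' n.
        m \<in> mcarrier M \<and> m' \<in> mcarrier M \<and> n \<in> mcarrier N}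
   \<union> {(\<lambda>q. tz_delta (m, madd N n n') q - tz_delta (m, n) q - tz_delta (m, n') q) | m n n'.
        m \<in> mcarrier M \<and> n \<in> mcarrier N \<and> n' \<in> mcarrier N}
   \<union> {(\<lambda>q. tz_delta (ract M m s, n) q - tz_delta (m, lact N s n) q) | m s n.
        m \<in> mcarrier M \<and> s \<in> acarrier S \<and> n \<in> mcarrier N}"

inductive_set tz_rel :: "('r, 's, 'm) bimod \<Rightarrow> 's alg \<Rightarrow> ('s, 't, 'n) bimod \<Rightarrow> ('m \<times> 'n \<Rightarrow> int) set"
  for M S N where
  zero: "(\<lambda>q. 0) \<in> tz_rel M S N"
| plus: "x \<in> tz_rel M S N \<Longrightarrow> g \<in> tz_gens M S N \<Longrightarrow> (\<lambda>q. x q + g q) \<in> tz_rel M S N"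
| minus: "x \<in> tz_rel M S N \<Longrightarrow> g \<in> tz_gens M S N \<Longrightarrow> (\<lambda>q. x q - g q) \<in> tz_rel M S N"

definition tz_cls :: "('r, 's, 'm) bimod \<Rightarrow> 's alg \<Rightarrow> ('s, 't, 'n) bimod
                      \<Rightarrow> ('m \<times> 'n \<Rightarrow> int) \<Rightarrow> ('m \<times> 'n \<Rightarrow> int) set" where
  "tz_cls M S N x = {y \<in> tz_free M N. (\<lambda>q. x q - y q) \<in> tz_rel M S N}"

definition tz_map :: "('m \<times> 'n \<Rightarrow> 'm \<times> 'n) \<Rightarrow> ('m \<times> 'n \<Rightarrow> int) \<Rightarrow> ('m \<times> 'n \<Rightarrow> int)" where
  "tz_map f x = (\<lambda>q. \<Sum>p\<in>{p. x p \<noteq> 0 \<and> f p = q}. x p)"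

definition tensor :: "('r, 's, 'm) bimod \<Rightarrow> 's alg \<Rightarrow> ('s, 't, 'n) bimod
                      \<Rightarrow> ('r, 't, ('m \<times> 'n \<Rightarrow> int) set) bimod" where
  "tensor M S N = \<lparr> mcarrier = tz_cls M S N ` tz_free M N,
      madd = (\<lambda>X Y. tz_cls M S N (\<lambda>q. rep X q + rep Y q)),
      mzero = tz_cls M S N (\<lambda>q. 0),
      lact = (\<lambda>r X. tz_cls M S N (tz_map (\<lambda>(m, n). (lact M r m, n)) (rep X))),
      ract = (\<lambda>X t. tz_cls M S N (tz_map (\<lambda>(m, n). (m, ract N n t)) (rep X))) \<rparr>"

definition Xmod :: "nat \<Rightarrow> (fa set, fa set, fa set) bimod" where
  "Xmod n = regbimod (nilcox (Suc n)) id (nc_chi n)"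

definition Dmod :: "nat \<Rightarrow> (fa set, fa set, fa set) bimod" where
  "Dmod m = regbimod (nilcox m) (nc_chi (m - 1)) id"

end

theory Submission
  imports Defs
begin


lemma fa_mul_Nil: "fa_mul f g [] = f [] * g []"
  by (simp add: fa_mul_def)

lemma fa_mul_Cons: "fa_mul f g (a#w) = f [] * g (a#w) + fa_mul (\<lambda>u. f (a#u)) g w"
  unfolding fa_mul_def by (simp add: sum.atMost_Suc_shift del: sum.atMost_Suc)

lemma fa_mul_add_left: "fa_mul (\<lambda>u. f u + g u) h w = fa_mul f h w + fa_mul g h w"
  unfolding fa_mul_def by (simp add: sum.distrib distrib_right)

lemma fa_mul_add_right: "fa_mul h (\<lambda>u. f u + g u) w = fa_mul h f w + fa_mul h g w"
  unfolding fa_mul_def by (simp add: sum.distrib distrib_left)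

lemma fa_mul_smul_left: "fa_mul (\<lambda>u. c * f u) h w = c * fa_mul f h w"
  unfolding fa_mul_def by (simp add: sum_distrib_left mult.assoc)

lemma fa_mul_smul_right: "fa_mul h (\<lambda>u. c * f u) w = c * fa_mul h f w"
  unfolding fa_mul_def by (simp add: sum_distrib_left mult_ac)

lemma fa_mul_assoc: "fa_mul (fa_mul f g) h w = fa_mul f (fa_mul g h) w"
proof (induction w arbitrary: f g h)
  case Nil
  then show ?case by (simp add: fa_mul_Nil)
next
  case (Cons a w)
  have d: "(\<lambda>u. fa_mul f g (a#u)) = (\<lambda>u. f [] * g (a#u) + fa_mul (\<lambda>u. f (a#u)) g u)"
    by (simp add: fa_mul_Cons)
  show ?case
    apply (simp add: fa_mul_Cons fa_mul_Nil d fa_mul_add_left fa_mul_smul_left Cons.IH)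
    by (simp add: algebra_simps)
qed

lemma fa_mul_zero_left: "fa_mul (\<lambda>u. 0) f w = 0"
  by (simp add: fa_mul_def)

lemma fa_mul_one_left: "fa_mul (fa_mon []) f w = f w"
proof (cases w)
  case (Cons a w')
  have "(\<lambda>u. fa_mon [] (a#u)) = (\<lambda>u. 0)" by (auto simp: fa_mon_def)
  then show ?thesis using Cons by (simp add: fa_mul_Cons fa_mul_zero_left fa_mon_def)
qed (simp add: fa_mul_Nil fa_mon_def)

lemma fa_mul_one_right: "fa_mul f (fa_mon []) w = f w"
proof -
  have "fa_mul f (fa_mon []) w = (\<Sum>k\<le>length w. if k = length w then f w else 0)"
    unfolding fa_mul_def fa_mon_def by (rule sum.cong) auto
  then show ?thesis by simp
qed

lemma fa_mul_one_left': "fa_mul (fa_mon []) f = f" by (rule ext) (rule fa_mul_one_left)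
lemma fa_mul_one_right': "fa_mul f (fa_mon []) = f" by (rule ext) (rule fa_mul_one_right)

typedef fr = "UNIV :: fa set" by auto

instantiation fr :: ring_1
begin
definition "zero_fr = Abs_fr (\<lambda>w. 0)"
definition "one_fr = Abs_fr (fa_mon [])"
definition "plus_fr x y = Abs_fr (\<lambda>w. Rep_fr x w + Rep_fr y w)"
definition "minus_fr x y = Abs_fr (\<lambda>w. Rep_fr x w - Rep_fr y w)"
definition "uminus_fr x = Abs_fr (\<lambda>w. - Rep_fr x w)"
definition "times_fr x y = Abs_fr (fa_mul (Rep_fr x) (Rep_fr y))"
instance
proof
  fix a b c :: fr
  show "a * b * c = a * (b * c)"
    by (simp add: times_fr_def Abs_fr_inverse fa_mul_assoc[abs_def])
  show "1 * a = a" by (simp add: times_fr_def one_fr_def Abs_fr_inverse fa_mul_one_left' Rep_fr_inverse)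
  show "a * 1 = a" by (simp add: times_fr_def one_fr_def Abs_fr_inverse fa_mul_one_right' Rep_fr_inverse)
  show "a + b + c = a + (b + c)" by (simp add: plus_fr_def Abs_fr_inverse add.assoc)
  show "a + b = b + a" by (simp add: plus_fr_def add.commute)
  show "0 + a = a" by (simp add: plus_fr_def zero_fr_def Abs_fr_inverse Rep_fr_inverse)
  show "- a + a = 0" by (simp add: plus_fr_def zero_fr_def uminus_fr_def Abs_fr_inverse)
  show "a - b = a + - b" by (simp add: plus_fr_def minus_fr_def uminus_fr_def Abs_fr_inverse)
  show "(a + b) * c = a * c + b * c"
    by (simp add: plus_fr_def times_fr_def Abs_fr_inverse fa_mul_add_left[abs_def])
  show "a * (b + c) = a * b + a * c"
    by (simp add: plus_fr_def times_fr_def Abs_fr_inverse fa_mul_add_right[abs_def])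
  show "(0::fr) \<noteq> 1"
    by (simp add: zero_fr_def one_fr_def Abs_fr_inject fa_mon_def fun_eq_iff)
qed
end

lemma Rep_plus: "Rep_fr (x + y) = (\<lambda>w. Rep_fr x w + Rep_fr y w)"
  by (simp add: plus_fr_def Abs_fr_inverse)
lemma Rep_minus: "Rep_fr (x - y) = (\<lambda>w. Rep_fr x w - Rep_fr y w)"
  by (simp add: minus_fr_def Abs_fr_inverse)
lemma Rep_uminus: "Rep_fr (- x) = (\<lambda>w. - Rep_fr x w)"
  by (simp add: uminus_fr_def Abs_fr_inverse)
lemma Rep_zero: "Rep_fr 0 = (\<lambda>w. 0)"
  by (simp add: zero_fr_def Abs_fr_inverse)
lemma Rep_times: "Rep_fr (x * y) = fa_mul (Rep_fr x) (Rep_fr y)"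
  by (simp add: times_fr_def Abs_fr_inverse)
lemma Rep_one: "Rep_fr 1 = fa_mon []"
  by (simp add: one_fr_def Abs_fr_inverse)
lemma Rep_sum: "Rep_fr (sum f S) = (\<lambda>w. \<Sum>i\<in>S. Rep_fr (f i) w)"
  by (induction S rule: infinite_finite_induct) (auto simp: Rep_zero Rep_plus)

definition M :: "nat list \<Rightarrow> fr" where "M u = Abs_fr (fa_mon u)"
definition qc :: "rat \<Rightarrow> fr" where "qc c = Abs_fr (\<lambda>w. if w = [] then c else 0)"

lemma Rep_M: "Rep_fr (M u) = fa_mon u" by (simp add: M_def Abs_fr_inverse)
lemma Rep_qc: "Rep_fr (qc c) = (\<lambda>w. if w = [] then c else 0)" by (simp add: qc_def Abs_fr_inverse)

lemma fa_mul_mon_left: "fa_mul (fa_mon u) f w = (if take (length u) w = u then f (drop (length u) w) else 0)"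
proof (induction u arbitrary: w)
  case Nil
  then show ?case by (simp add: fa_mul_one_left)
next
  case (Cons a u)
  show ?case
  proof (cases w)
    case Nil
    then show ?thesis by (simp add: fa_mul_Nil fa_mon_def)
  next
    case (Cons b w')
    have e: "(\<lambda>v. fa_mon (a # u) (b # v)) = (if a = b then fa_mon u else (\<lambda>v. 0))"
      by (auto simp: fa_mon_def)
    have z: "fa_mul (\<lambda>v. 0) f w' = 0" by (simp add: fa_mul_def)
    show ?thesis
    proof (cases "a = b")
      case True
      then have "(\<lambda>v. fa_mon (a # u) (b # v)) = fa_mon u" by (auto simp: fa_mon_def)
      then show ?thesis using Cons True Cons.IH[of w'] by (simp add: fa_mul_Cons fa_mon_def)
    next
      case False
      then have "(\<lambda>v. fa_mon (a # u) (b # v)) = (\<lambda>v. 0)" by (auto simp: fa_mon_def)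
      then show ?thesis using Cons False by (simp add: fa_mul_Cons fa_mon_def z)
    qed
  qed
qed

lemma M_append: "M (u @ v) = M u * M v"
proof -
  have "fa_mul (fa_mon u) (fa_mon v) = fa_mon (u @ v)"
    apply (rule ext)
    apply (simp add: fa_mul_mon_left)
    apply (auto simp: fa_mon_def append_eq_conv_conj)
    by (metis append_take_drop_id)
  then show ?thesis by (simp add: M_def times_fr_def Abs_fr_inverse)
qed

lemma M_Nil: "M [] = 1" by (simp add: M_def one_fr_def)

lemma qc_mult_left: "Rep_fr (qc c * x) = (\<lambda>w. c * Rep_fr x w)"
proof (rule ext)
  fix w show "Rep_fr (qc c * x) w = c * Rep_fr x w"
  proof (cases w)
    case (Cons a w')
    have "(\<lambda>u. Rep_fr (qc c) (a#u)) = (\<lambda>u. 0)" by (auto simp: Rep_qc)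
    then show ?thesis using Cons by (simp add: Rep_times fa_mul_Cons fa_mul_zero_left Rep_qc)
  qed (simp add: Rep_times Rep_qc fa_mul_Nil)
qed

lemma qc_mult_right: "Rep_fr (x * qc c) = (\<lambda>w. Rep_fr x w * c)"
proof (rule ext)
  fix w
  have "fa_mul (Rep_fr x) (Rep_fr (qc c)) w = (\<Sum>k\<le>length w. if k = length w then Rep_fr x w * c else 0)"
    unfolding fa_mul_def Rep_qc by (rule sum.cong) auto
  then show "Rep_fr (x * qc c) w = Rep_fr x w * c" by (simp add: Rep_times)
qed

lemma qc_comm: "qc c * x = x * qc c"
  by (rule Rep_fr_inject[THEN iffD1]) (simp add: qc_mult_left qc_mult_right mult.commute)

lemma qc_add: "qc (a + b) = qc a + qc b"
  by (rule Rep_fr_inject[THEN iffD1]) (auto simp: Rep_plus Rep_qc)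
lemma qc_mult: "qc (a * b) = qc a * qc b"
  by (rule Rep_fr_inject[THEN iffD1]) (auto simp: qc_mult_left Rep_qc)
lemma qc_one: "qc 1 = 1"
  by (rule Rep_fr_inject[THEN iffD1]) (auto simp: Rep_one Rep_qc fa_mon_def)
lemma qc_zero: "qc 0 = 0"
  by (rule Rep_fr_inject[THEN iffD1]) (auto simp: Rep_zero Rep_qc)
lemma qc_minus: "qc (- a) = - qc a"
  by (rule Rep_fr_inject[THEN iffD1]) (auto simp: Rep_uminus Rep_qc)



definition supp :: "fr \<Rightarrow> nat list set" where "supp x = {w. Rep_fr x w \<noteq> 0}"

definition FS :: "nat set \<Rightarrow> fr set" where
  "FS A = {x. finite (supp x) \<and> (\<forall>w\<in>supp x. set w \<subseteq> A)}"

abbreviation Fr :: "nat \<Rightarrow> fr set" where "Fr n \<equiv> FS {1..<n}"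

lemma Fr_iff: "x \<in> Fr n \<longleftrightarrow> Rep_fr x \<in> F n"
  by (auto simp: FS_def F_def supp_def)

lemma Fr_iff': "x \<in> FS {Suc 0..<n} \<longleftrightarrow> Rep_fr x \<in> F n"
  using Fr_iff by simp

lemma FS_zero[simp]: "0 \<in> FS A"
  by (simp add: FS_def supp_def Rep_zero)

lemma FS_add[intro]: "x \<in> FS A \<Longrightarrow> y \<in> FS A \<Longrightarrow> x + y \<in> FS A"
proof -
  assume a: "x \<in> FS A" "y \<in> FS A"
  have "supp (x + y) \<subseteq> supp x \<union> supp y" by (auto simp: supp_def Rep_plus)
  then show ?thesis using a unfolding FS_def by (auto intro: finite_subset)
qed

lemma FS_uminus[intro]: "x \<in> FS A \<Longrightarrow> - x \<in> FS A"
proof -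
  assume a: "x \<in> FS A"
  have "supp (- x) = supp x" by (auto simp: supp_def Rep_uminus)
  then show ?thesis using a unfolding FS_def by auto
qed

lemma FS_diff[intro]: "x \<in> FS A \<Longrightarrow> y \<in> FS A \<Longrightarrow> x - y \<in> FS A"
  using FS_add FS_uminus by (metis diff_conv_add_uminus)

lemma supp_M: "supp (M w) = {w}" by (auto simp: supp_def Rep_M fa_mon_def)

lemma FS_M[intro]: "set w \<subseteq> A \<Longrightarrow> M w \<in> FS A"
  by (simp add: FS_def supp_M)

lemma FS_one[intro]: "1 \<in> FS A"
  using FS_M[of "[]" A] by (simp add: M_Nil)

lemma supp_mult: "supp (x * y) \<subseteq> (\<lambda>(u, v). u @ v) ` (supp x \<times> supp y)"
proof
  fix w assume "w \<in> supp (x * y)"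
  then have "(\<Sum>k\<le>length w. Rep_fr x (take k w) * Rep_fr y (drop k w)) \<noteq> 0"
    by (simp add: supp_def Rep_times fa_mul_def)
  then obtain k where "Rep_fr x (take k w) * Rep_fr y (drop k w) \<noteq> 0"
    by (meson sum.neutral)
  then have "(take k w, drop k w) \<in> supp x \<times> supp y" by (simp add: supp_def)
  then show "w \<in> (\<lambda>(u, v). u @ v) ` (supp x \<times> supp y)"
    by (metis (no_types, lifting) append_take_drop_id case_prod_conv image_eqI)
qed

lemma FS_mult[intro]: "x \<in> FS A \<Longrightarrow> y \<in> FS A \<Longrightarrow> x * y \<in> FS A"
proof -
  assume a: "x \<in> FS A" "y \<in> FS A"
  have f: "finite ((\<lambda>(u, v). u @ v) ` (supp x \<times> supp y))" using a by (simp add: FS_def)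
  have "\<forall>w\<in>(\<lambda>(u, v). u @ v) ` (supp x \<times> supp y). set w \<subseteq> A" using a by (auto simp: FS_def)
  then have "\<forall>w\<in>supp (x * y). set w \<subseteq> A" using supp_mult[of x y] by blast
  then show ?thesis using supp_mult[of x y] f unfolding FS_def by (auto intro: finite_subset)
qed

lemma FS_qc[intro]: "qc c \<in> FS A"
proof -
  have "supp (qc c) \<subseteq> {[]}" by (auto simp: supp_def Rep_qc split: if_splits)
  then show ?thesis unfolding FS_def by (auto intro: finite_subset)
qed

lemma FS_sum[intro]: "(\<And>i. i \<in> S \<Longrightarrow> f i \<in> FS A) \<Longrightarrow> sum f S \<in> FS A"
  by (induction S rule: infinite_finite_induct) auto

lemma FS_of_int[intro]: "of_int k \<in> FS A"
proof (induction k rule: int_induct[where k=0])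
  case base then show ?case by simp
next
  case (step1 i) then show ?case by (simp add: FS_add FS_one)
next
  case (step2 i) then show ?case by (simp add: FS_diff FS_one)
qed

lemma FS_mono: "A \<subseteq> B \<Longrightarrow> FS A \<subseteq> FS B"
  by (auto simp: FS_def)

lemma Fr_Suc: "x \<in> Fr n \<Longrightarrow> x \<in> Fr (Suc n)"
  using FS_mono[of "{1..<n}" "{1..<Suc n}"] by auto

lemma Fr_Suc': "x \<in> FS {Suc 0..<n} \<Longrightarrow> x \<in> FS {Suc 0..<Suc n}"
  using Fr_Suc by simp

lemma Rep_qcM: "Rep_fr (qc c * M w) = (\<lambda>v. if v = w then c else 0)"
  by (auto simp: qc_mult_left Rep_M fa_mon_def)

lemma FS_decomp:
  assumes "finite S" "supp x \<subseteq> S"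
  shows "x = (\<Sum>w\<in>S. qc (Rep_fr x w) * M w)"
proof -
  have "Rep_fr (\<Sum>w\<in>S. qc (Rep_fr x w) * M w) = Rep_fr x"
  proof
    fix v
    have "Rep_fr (\<Sum>w\<in>S. qc (Rep_fr x w) * M w) v = (\<Sum>w\<in>S. if v = w then Rep_fr x w else 0)"
      by (simp add: Rep_sum Rep_qcM)
    also have "\<dots> = Rep_fr x v"
      using assms by (auto simp: supp_def)
    finally show "Rep_fr (\<Sum>w\<in>S. qc (Rep_fr x w) * M w) v = Rep_fr x v" .
  qed
  then show ?thesis by (simp add: Rep_fr_inject)
qed

lemma FS_induct[consumes 1, case_names zero step]:
  assumes x: "x \<in> FS A"
    and z: "P 0"
    and s: "\<And>y c w. y \<in> FS A \<Longrightarrow> P y \<Longrightarrow> set w \<subseteq> A \<Longrightarrow> P (y + qc c * M w)"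
  shows "P x"
proof -
  have fin: "finite (supp x)" and sw: "\<forall>w\<in>supp x. set w \<subseteq> A" using x by (auto simp: FS_def)
  have claim: "(\<Sum>w\<in>S. qc (Rep_fr x w) * M w) \<in> FS A \<and> P (\<Sum>w\<in>S. qc (Rep_fr x w) * M w)"
    if "finite S" "S \<subseteq> supp x" for S
    using that
  proof (induction S rule: finite_induct)
    case empty then show ?case using z by simp
  next
    case (insert w S)
    have sw': "set w \<subseteq> A" using insert sw by auto
    have e: "(\<Sum>w\<in>insert w S. qc (Rep_fr x w) * M w) = (\<Sum>w\<in>S. qc (Rep_fr x w) * M w) + qc (Rep_fr x w) * M w"
      using insert by (simp add: add.commute)
    have IH: "(\<Sum>w\<in>S. qc (Rep_fr x w) * M w) \<in> FS A" "P (\<Sum>w\<in>S. qc (Rep_fr x w) * M w)"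
      using insert by auto
    have "(\<Sum>w\<in>S. qc (Rep_fr x w) * M w) + qc (Rep_fr x w) * M w \<in> FS A"
      by (rule FS_add[OF IH(1) FS_mult[OF FS_qc FS_M[OF sw']]])
    moreover have "P ((\<Sum>w\<in>S. qc (Rep_fr x w) * M w) + qc (Rep_fr x w) * M w)"
      by (rule s[OF IH(1) IH(2) sw'])
    ultimately show ?case unfolding e by blast
  qed
  have e: "x = (\<Sum>w\<in>supp x. qc (Rep_fr x w) * M w)" by (rule FS_decomp[OF fin order_refl])
  show ?thesis by (subst e) (use claim[OF fin order_refl] in blast)
qed

section \<open>Ideal\<close>

definition Idl :: "nat \<Rightarrow> fr set" where "Idl n = {x. Rep_fr x \<in> nc_ideal n}"

definition RelsF :: "nat \<Rightarrow> fr set" where "RelsF n = Abs_fr ` nc_rels n"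

lemma fa_sub_Rep: "fa_add (Rep_fr x) (fa_smul (-1) (Rep_fr y)) = Rep_fr (x - y)"
  by (auto simp: fa_add_def fa_smul_def Rep_minus)

lemma RelsF_mem: "r \<in> RelsF n \<longleftrightarrow> Rep_fr r \<in> nc_rels n"
proof
  assume "r \<in> RelsF n"
  then obtain f where "f \<in> nc_rels n" "r = Abs_fr f" by (auto simp: RelsF_def)
  then show "Rep_fr r \<in> nc_rels n" by (simp add: Abs_fr_inverse)
next
  assume "Rep_fr r \<in> nc_rels n"
  then have "Abs_fr (Rep_fr r) \<in> RelsF n" unfolding RelsF_def by (rule imageI)
  then show "r \<in> RelsF n" by (simp add: Rep_fr_inverse)
qed

lemma RelsF_iff: "r \<in> RelsF n \<longleftrightarrow>
   (\<exists>i. r = M [i, i] \<and> i \<in> {1..<n})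
 \<or> (\<exists>i j. r = M [i, j] - M [j, i] \<and> i \<in> {1..<n} \<and> j \<in> {1..<n} \<and> (i > j + 1 \<or> j > i + 1))
 \<or> (\<exists>i. r = M [i, Suc i, i] - M [Suc i, i, Suc i] \<and> i \<in> {1..<n} \<and> Suc i \<in> {1..<n})"
proof -
  have e: "\<And>a b. Rep_fr r = fa_add (fa_mon a) (fa_smul (-1) (fa_mon b)) \<longleftrightarrow> r = M a - M b"
    by (metis Rep_M fa_sub_Rep Rep_fr_inject)
  have e2: "\<And>a. Rep_fr r = fa_mon a \<longleftrightarrow> r = M a" by (metis Rep_M Rep_fr_inject)
  show ?thesis unfolding RelsF_mem nc_rels_def
    by (simp only: Un_iff mem_Collect_eq e e2 disj_assoc)
qed

lemma gen_Rep: "fa_add (Rep_fr x) (fa_smul c (fa_mul (fa_mul (fa_mon u) (Rep_fr r)) (fa_mon v)))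
   = Rep_fr (x + qc c * (M u * r * M v))"
proof -
  have "Rep_fr (x + qc c * (M u * r * M v)) = (\<lambda>w. Rep_fr x w + c * Rep_fr (M u * r * M v) w)"
    by (simp add: Rep_plus qc_mult_left)
  also have "Rep_fr (M u * r * M v) = fa_mul (fa_mul (fa_mon u) (Rep_fr r)) (fa_mon v)"
    by (simp add: Rep_times Rep_M)
  finally show ?thesis by (simp add: fa_add_def fa_smul_def)
qed

lemma Id_zero[simp]: "0 \<in> Idl n"
  using nc_ideal.zero by (simp add: Idl_def Rep_zero fa_zero_def)

lemma Id_step: "x \<in> Idl n \<Longrightarrow> r \<in> RelsF n \<Longrightarrow> set u \<subseteq> {1..<n} \<Longrightarrow> set v \<subseteq> {1..<n}
   \<Longrightarrow> x + qc c * (M u * r * M v) \<in> Idl n"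
  unfolding Idl_def RelsF_def
  using nc_ideal.step[of "Rep_fr x" n "Rep_fr r" u v c]
  by (auto simp: gen_Rep Abs_fr_inverse)

lemma Id_induct[consumes 1, case_names zero step]:
  assumes x: "x \<in> Idl n"
    and z: "P 0"
    and s: "\<And>y r u v c. y \<in> Idl n \<Longrightarrow> P y \<Longrightarrow> r \<in> RelsF n \<Longrightarrow> set u \<subseteq> {1..<n} \<Longrightarrow> set v \<subseteq> {1..<n}
       \<Longrightarrow> P (y + qc c * (M u * r * M v))"
  shows "P x"
proof -
  have "f \<in> nc_ideal n \<Longrightarrow> P (Abs_fr f)" for f
  proof (induction f rule: nc_ideal.induct)
    case zero
    then show ?case using z by (simp add: zero_fr_def fa_zero_def)
  next
    case (step y r u v c)
    have "P (Abs_fr y + qc c * (M u * Abs_fr r * M v))"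
      apply (rule s)
      using step by (auto simp: Idl_def Abs_fr_inverse RelsF_def)
    moreover have "Abs_fr (fa_add y (fa_smul c (fa_mul (fa_mul (fa_mon u) r) (fa_mon v))))
       = Abs_fr y + qc c * (M u * Abs_fr r * M v)"
      using gen_Rep[of "Abs_fr y" c u "Abs_fr r" v] by (simp add: Abs_fr_inverse Rep_fr_inverse)
    ultimately show ?case by simp
  qed
  then have "P (Abs_fr (Rep_fr x))" using x by (simp add: Idl_def)
  then show ?thesis by (simp add: Rep_fr_inverse)
qed

lemma Id_gen: "r \<in> RelsF n \<Longrightarrow> set u \<subseteq> {1..<n} \<Longrightarrow> set v \<subseteq> {1..<n} \<Longrightarrow> M u * r * M v \<in> Idl n"
  using Id_step[OF Id_zero, of r n u v 1] by (simp add: qc_one)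

lemma Id_add_aux: "y \<in> Idl n \<Longrightarrow> x \<in> Idl n \<Longrightarrow> x + y \<in> Idl n"
proof (induction y rule: Id_induct)
  case zero then show ?case by simp
next
  case (step y r u v c)
  then show ?case using Id_step[of "x + y" n r u v c] by (simp add: add.assoc)
qed

lemma Id_add[intro]: "x \<in> Idl n \<Longrightarrow> y \<in> Idl n \<Longrightarrow> x + y \<in> Idl n"
  using Id_add_aux by blast

lemma Id_qc[intro]: "x \<in> Idl n \<Longrightarrow> qc c * x \<in> Idl n"
proof (induction x rule: Id_induct)
  case zero then show ?case by simp
next
  case (step y r u v d)
  then show ?case using Id_step[of "qc c * y" n r u v "c * d"]
    by (simp add: distrib_left qc_mult mult.assoc)
qed

lemma Id_uminus[intro]: "x \<in> Idl n \<Longrightarrow> - x \<in> Idl n"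
  using Id_qc[of x n "-1"] by (simp add: qc_minus qc_one)

lemma Id_diff[intro]: "x \<in> Idl n \<Longrightarrow> y \<in> Idl n \<Longrightarrow> x - y \<in> Idl n"
  by (metis Id_add Id_uminus diff_conv_add_uminus)

lemma Id_sum[intro]: "(\<And>i. i \<in> S \<Longrightarrow> f i \<in> Idl n) \<Longrightarrow> sum f S \<in> Idl n"
  by (induction S rule: infinite_finite_induct) auto

lemma Id_lM[intro]: "x \<in> Idl n \<Longrightarrow> set w \<subseteq> {1..<n} \<Longrightarrow> M w * x \<in> Idl n"
proof (induction x rule: Id_induct)
  case zero then show ?case by simp
next
  case (step y r u v c)
  have "M w * (y + qc c * (M u * r * M v)) = M w * y + qc c * (M (w @ u) * r * M v)"
    by (simp add: distrib_left M_append mult.assoc[symmetric] qc_comm[of c "M w"])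
  then show ?case using step Id_step[of "M w * y" n r "w @ u" v c] by simp
qed

lemma Id_rM[intro]: "x \<in> Idl n \<Longrightarrow> set w \<subseteq> {1..<n} \<Longrightarrow> x * M w \<in> Idl n"
proof (induction x rule: Id_induct)
  case zero then show ?case by simp
next
  case (step y r u v c)
  have "(y + qc c * (M u * r * M v)) * M w = y * M w + qc c * (M u * r * M (v @ w))"
    by (simp add: distrib_right M_append mult.assoc)
  then show ?case using step Id_step[of "y * M w" n r u "v @ w" c] by simp
qed

lemma Id_lmul[intro]: "g \<in> Fr n \<Longrightarrow> x \<in> Idl n \<Longrightarrow> g * x \<in> Idl n"
proof (induction g rule: FS_induct)
  case zero then show ?case by simp
next
  case (step y c w)
  then show ?case by (simp add: distrib_right mult.assoc Id_add Id_qc Id_lM)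
qed

lemma Id_rmul[intro]: "g \<in> Fr n \<Longrightarrow> x \<in> Idl n \<Longrightarrow> x * g \<in> Idl n"
proof (induction g rule: FS_induct)
  case zero then show ?case by simp
next
  case (step y c w)
  have "x * (y + qc c * M w) = x * y + qc c * (x * M w)"
    by (simp add: distrib_left mult.assoc[symmetric] qc_comm[of c x])
  then show ?case using step by (simp add: Id_add Id_qc Id_rM)
qed

lemma RelsF_Fr: "r \<in> RelsF n \<Longrightarrow> r \<in> Fr n"
  unfolding RelsF_iff by (auto intro!: FS_M FS_diff)

lemma Id_Fr: "x \<in> Idl n \<Longrightarrow> x \<in> Fr n"
proof (induction x rule: Id_induct)
  case zero then show ?case by simp
next
  case (step y r u v c)
  then show ?case using RelsF_Fr by (auto intro!: FS_add FS_mult FS_M)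
qed

lemma RelsF_mono: "r \<in> RelsF n \<Longrightarrow> r \<in> RelsF (Suc n)"
  unfolding RelsF_iff
  apply (elim disjE exE conjE)
  subgoal for i by (rule disjI1, rule exI[of _ i]) simp
  subgoal for i j by (rule disjI2, rule disjI1, rule exI[of _ i], rule exI[of _ j]) simp
  subgoal for i j by (rule disjI2, rule disjI1, rule exI[of _ i], rule exI[of _ j]) simp
  subgoal for i by (rule disjI2, rule disjI2, rule exI[of _ i]) simp
  done

lemma Id_Suc: "x \<in> Idl n \<Longrightarrow> x \<in> Idl (Suc n)"
proof (induction x rule: Id_induct)
  case zero then show ?case by simp
next
  case (step y r u v c)
  have "set u \<subseteq> {1..<Suc n}" "set v \<subseteq> {1..<Suc n}" using step by auto
  then show ?case using Id_step[of y "Suc n" r u v c] RelsF_mono step by auto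
qed



definition cl :: "nat \<Rightarrow> fr \<Rightarrow> fa set" where "cl n x = nc_cls n (Rep_fr x)"
definition R :: "fa set \<Rightarrow> fr" where "R X = Abs_fr (rep X)"

lemma Rep_image_eq: "(\<And>g. g \<in> A \<longleftrightarrow> Abs_fr g \<in> B) \<Longrightarrow> A = Rep_fr ` B"
proof -
  assume h: "\<And>g. g \<in> A \<longleftrightarrow> Abs_fr g \<in> B"
  show ?thesis
  proof
    show "A \<subseteq> Rep_fr ` B"
    proof
      fix g assume "g \<in> A"
      then have "Abs_fr g \<in> B" using h by blast
      then show "g \<in> Rep_fr ` B" by (metis Abs_fr_inverse UNIV_I image_eqI)
    qed
    show "Rep_fr ` B \<subseteq> A"
    proof
      fix g assume "g \<in> Rep_fr ` B"
      then obtain y where "y \<in> B" "g = Rep_fr y" by auto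
      then show "g \<in> A" using h by (simp add: Rep_fr_inverse)
    qed
  qed
qed

lemma cl_alt: "cl n x = Rep_fr ` {y \<in> Fr n. x - y \<in> Idl n}"
proof -
  have "nc_cls n (Rep_fr x) = {g \<in> F n. Rep_fr (x - Abs_fr g) \<in> nc_ideal n}"
    unfolding nc_cls_def by (metis (no_types, lifting) Abs_fr_inverse UNIV_I fa_sub_Rep)
  also have "\<dots> = Rep_fr ` {y \<in> Fr n. x - y \<in> Idl n}"
    by (rule Rep_image_eq) (simp add: Fr_iff Fr_iff' Idl_def Abs_fr_inverse)
  finally show ?thesis by (simp add: cl_def)
qed

lemma cl_mem: "x \<in> Fr n \<Longrightarrow> Rep_fr x \<in> cl n x"
  by (simp add: cl_alt)

lemma Id_Fr_diff: "x - y \<in> Idl n \<Longrightarrow> y \<in> Fr n \<Longrightarrow> x \<in> Fr n"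
  using Id_Fr FS_add by (metis diff_add_cancel)

lemma cl_eq: "x - y \<in> Idl n \<Longrightarrow> cl n x = cl n y"
proof -
  assume a: "x - y \<in> Idl n"
  have "\<And>z. x - z \<in> Idl n \<longleftrightarrow> y - z \<in> Idl n"
  proof
    fix z assume "x - z \<in> Idl n"
    then have "(x - z) - (x - y) \<in> Idl n" using a by blast
    then show "y - z \<in> Idl n" by (simp add: algebra_simps)
  next
    fix z assume "y - z \<in> Idl n"
    then have "(y - z) + (x - y) \<in> Idl n" using a by blast
    then show "x - z \<in> Idl n" by (simp add: algebra_simps)
  qed
  then show ?thesis by (simp add: cl_alt)
qed

lemma cl_eq_iff: "y \<in> Fr n \<Longrightarrow> cl n x = cl n y \<longleftrightarrow> x - y \<in> Idl n"
proof
  assume "y \<in> Fr n" "cl n x = cl n y"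
  then have "Rep_fr y \<in> cl n x" using cl_mem by auto
  then show "x - y \<in> Idl n" by (auto simp: cl_alt Rep_fr_inject)
qed (rule cl_eq)

lemma rep_cl: assumes "x \<in> Fr n" shows "R (cl n x) \<in> Fr n \<and> x - R (cl n x) \<in> Idl n"
proof -
  have "rep (cl n x) \<in> cl n x" unfolding rep_def by (rule someI[where P="\<lambda>y. y \<in> cl n x", OF cl_mem[OF assms]])
  then obtain y where "y \<in> Fr n" "x - y \<in> Idl n" "rep (cl n x) = Rep_fr y" by (auto simp: cl_alt)
  then show ?thesis by (simp add: R_def Rep_fr_inverse)
qed

lemma R_cl_Fr: "x \<in> Fr n \<Longrightarrow> R (cl n x) \<in> Fr n" using rep_cl by blast
lemma R_cl_Id: "x \<in> Fr n \<Longrightarrow> R (cl n x) - x \<in> Idl n"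
  using rep_cl[of x n] Id_uminus by fastforce

lemma cl_R_cl: "x \<in> Fr n \<Longrightarrow> cl n (R (cl n x)) = cl n x"
  using R_cl_Id cl_eq by blast

lemma carrier_nilcox: "acarrier (nilcox n) = cl n ` Fr n"
proof -
  have "F n = Rep_fr ` Fr n" by (rule Rep_image_eq) (simp add: Fr_iff Fr_iff' Abs_fr_inverse)
  then show ?thesis by (auto simp: nilcox_def cl_def)
qed

lemma rep_R: "rep X = Rep_fr (R X)" by (simp add: R_def Abs_fr_inverse)

lemma aadd_cl: "x \<in> Fr n \<Longrightarrow> y \<in> Fr n \<Longrightarrow> aadd (nilcox n) (cl n x) (cl n y) = cl n (x + y)"
proof -
  assume a: "x \<in> Fr n" "y \<in> Fr n"
  have "aadd (nilcox n) (cl n x) (cl n y) = cl n (R (cl n x) + R (cl n y))"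
    by (simp add: nilcox_def cl_def[of n "_ + _"] rep_R fa_add_def Rep_plus)
  also have "\<dots> = cl n (x + y)"
  proof (rule cl_eq)
    have "(R (cl n x) - x) + (R (cl n y) - y) \<in> Idl n" using a R_cl_Id by blast
    then show "R (cl n x) + R (cl n y) - (x + y) \<in> Idl n" by (simp add: algebra_simps)
  qed
  finally show ?thesis .
qed

lemma amul_cl: "x \<in> Fr n \<Longrightarrow> y \<in> Fr n \<Longrightarrow> amul (nilcox n) (cl n x) (cl n y) = cl n (x * y)"
proof -
  assume a: "x \<in> Fr n" "y \<in> Fr n"
  have "amul (nilcox n) (cl n x) (cl n y) = cl n (R (cl n x) * R (cl n y))"
    by (simp add: nilcox_def cl_def[of n "_ * _"] rep_R Rep_times)
  also have "\<dots> = cl n (x * y)"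
  proof (rule cl_eq)
    have "(R (cl n x) - x) * R (cl n y) + x * (R (cl n y) - y) \<in> Idl n"
      using a R_cl_Id R_cl_Fr by (blast intro: Id_add Id_rmul Id_lmul)
    then show "R (cl n x) * R (cl n y) - x * y \<in> Idl n" by (simp add: algebra_simps)
  qed
  finally show ?thesis .
qed

lemma azero_cl: "azero (nilcox n) = cl n 0"
  by (simp add: nilcox_def cl_def Rep_zero fa_zero_def)
lemma aone_cl: "aone (nilcox n) = cl n 1"
  by (simp add: nilcox_def cl_def Rep_one fa_one_def)

lemma chi_cl: "x \<in> Fr n \<Longrightarrow> nc_chi n (cl n x) = cl (Suc n) x"
proof -
  assume a: "x \<in> Fr n"
  have "nc_chi n (cl n x) = cl (Suc n) (R (cl n x))"
    by (simp add: nc_chi_def cl_def rep_R)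
  also have "\<dots> = cl (Suc n) x"
    using R_cl_Id[OF a] Id_Suc cl_eq by blast
  finally show ?thesis .
qed

lemma carrier_E: "X \<in> acarrier (nilcox n) \<Longrightarrow> (\<And>x. x \<in> Fr n \<Longrightarrow> X = cl n x \<Longrightarrow> P) \<Longrightarrow> P"
  by (auto simp: carrier_nilcox)

lemma R_Fr: "X \<in> acarrier (nilcox n) \<Longrightarrow> R X \<in> Fr n"
  unfolding carrier_nilcox using R_cl_Fr by blast

lemma cl_R: "X \<in> acarrier (nilcox n) \<Longrightarrow> cl n (R X) = X"
  unfolding carrier_nilcox using cl_R_cl by blast

lemma cl_in: "x \<in> Fr n \<Longrightarrow> cl n x \<in> acarrier (nilcox n)"
  by (simp add: carrier_nilcox)



section \<open>Representation\<close>

definition act1 :: "nat \<Rightarrow> (nat \<Rightarrow> nat) \<Rightarrow> (nat \<Rightarrow> nat) option" where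
  "act1 i p = (if p i < p (Suc i) then Some (p(i := p (Suc i), Suc i := p i)) else None)"

fun act :: "nat list \<Rightarrow> (nat \<Rightarrow> nat) \<Rightarrow> (nat \<Rightarrow> nat) option" where
  "act [] p = Some p"
| "act (i # w) p = Option.bind (act w p) (act1 i)"

lemma act_append: "act (u @ v) p = Option.bind (act v p) (act u)"
  by (induction u) (auto simp: bind_assoc)

lemma act_ii: "act [i, i] p = None"
  by (auto simp: act1_def split: if_splits)

lemma act_comm: "i > j + 1 \<or> j > i + 1 \<Longrightarrow> act [i, j] p = act [j, i] p"
  by (auto simp: act1_def fun_eq_iff)

lemma act_braid: "act [i, Suc i, i] p = act [Suc i, i, Suc i] p"
  by (auto simp: act1_def fun_eq_iff)

definition ind :: "bool \<Rightarrow> rat" where "ind b = (if b then 1 else 0)"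

definition L :: "(nat \<Rightarrow> nat) \<Rightarrow> (nat \<Rightarrow> nat) \<Rightarrow> fr \<Rightarrow> rat" where
  "L p q x = (\<Sum>w\<in>supp x. Rep_fr x w * ind (act w p = Some q))"

lemma L_sup: "finite S \<Longrightarrow> supp x \<subseteq> S \<Longrightarrow> L p q x = (\<Sum>w\<in>S. Rep_fr x w * ind (act w p = Some q))"
  unfolding L_def by (rule sum.mono_neutral_left) (auto simp: supp_def)

lemma supp_add: "supp (x + y) \<subseteq> supp x \<union> supp y" by (auto simp: supp_def Rep_plus)
lemma supp_diff: "supp (x - y) \<subseteq> supp x \<union> supp y" by (auto simp: supp_def Rep_minus)
lemma supp_qc: "supp (qc c * x) \<subseteq> supp x" by (auto simp: supp_def qc_mult_left)

lemma L_add: "finite (supp x) \<Longrightarrow> finite (supp y) \<Longrightarrow> L p q (x + y) = L p q x + L p q y"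
  apply (subst (1 2 3) L_sup[where S="supp x \<union> supp y"])
  using supp_add by (auto simp: Rep_plus sum.distrib distrib_right)

lemma L_diff: "finite (supp x) \<Longrightarrow> finite (supp y) \<Longrightarrow> L p q (x - y) = L p q x - L p q y"
  apply (subst (1 2 3) L_sup[where S="supp x \<union> supp y"])
  using supp_diff by (auto simp: Rep_minus sum_subtractf left_diff_distrib)

lemma L_qc: "finite (supp x) \<Longrightarrow> L p q (qc c * x) = c * L p q x"
  apply (subst (1 2) L_sup[where S="supp x"])
  using supp_qc by (auto simp: qc_mult_left sum_distrib_left mult.assoc)

lemma L_zero[simp]: "L p q 0 = 0"
  by (simp add: L_def supp_def Rep_zero)

lemma L_M: "L p q (M w) = ind (act w p = Some q)"
  by (simp add: L_def supp_M Rep_M fa_mon_def)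

lemma fin_FS: "x \<in> FS A \<Longrightarrow> finite (supp x)" by (simp add: FS_def)

lemma fin_mult: "finite (supp x) \<Longrightarrow> finite (supp y) \<Longrightarrow> finite (supp (x * y))"
  using supp_mult[of x y] by (meson finite_SigmaI finite_imageI finite_subset)

lemma fin_sum: "(\<And>i. i \<in> S \<Longrightarrow> finite (supp (f i))) \<Longrightarrow> finite (supp (sum f S))"
proof (induction S rule: infinite_finite_induct)
  case (infinite A) then show ?case by (simp add: supp_def Rep_zero)
next
  case empty then show ?case by (simp add: supp_def Rep_zero)
next
  case (insert x F) then show ?case using supp_add[of "f x" "sum f F"]
    by (auto intro: finite_subset)
qed

lemma L_sum: "(\<And>i. i \<in> S \<Longrightarrow> finite (supp (f i))) \<Longrightarrow> L p q (sum f S) = (\<Sum>i\<in>S. L p q (f i))"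
proof (induction S rule: infinite_finite_induct)
  case (insert x F) then show ?case by (simp add: L_add fin_sum)
qed auto

lemma fin_M: "finite (supp (M w))" by (simp add: supp_M)

lemma L_rmul_M: assumes "x \<in> FS A"
  shows "L p q (x * M v) = (case act v p of None \<Rightarrow> 0 | Some p' \<Rightarrow> L p' q x)"
  using assms
proof (induction x rule: FS_induct)
  case zero then show ?case by (simp split: option.split)
next
  case (step y c w)
  have fy: "finite (supp y)" using step fin_FS by blast
  have "(y + qc c * M w) * M v = y * M v + qc c * M (w @ v)"
    by (simp add: distrib_right M_append mult.assoc)
  then have "L p q ((y + qc c * M w) * M v) = L p q (y * M v) + c * ind (act (w @ v) p = Some q)"
    using fy by (simp add: L_add L_qc fin_mult fin_M fin_sum L_M supp_qc
        finite_subset[OF supp_qc fin_M])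
  moreover have "L p' q (y + qc c * M w) = L p' q y + c * ind (act w p' = Some q)" for p'
    using fy by (simp add: L_add L_qc fin_M L_M finite_subset[OF supp_qc fin_M])
  ultimately show ?case using step by (simp add: act_append ind_def split: option.split)
qed

lemma L_Id: "x \<in> Idl n \<Longrightarrow> L p q x = 0"
proof (induction x rule: Id_induct)
  case zero then show ?case by simp
next
  case (step y r u v c)
  have fy: "finite (supp y)" using Id_Fr step fin_FS by blast
  have fr: "finite (supp r)" using RelsF_Fr step fin_FS by blast
  have f2: "finite (supp (M u * r * M v))" using fr by (simp add: fin_mult fin_M)
  have "L p q (M u * r * M v) = 0"
    using \<open>r \<in> RelsF n\<close> unfolding RelsF_iff
  proof (elim disjE exE conjE)
    fix i assume "r = M [i, i]"
    then have "M u * r * M v = M (u @ [i, i] @ v)" by (simp only: M_append mult.assoc)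
    have "act (u @ [i, i] @ v) p = None"
      by (simp only: act_append act_ii) (cases "act v p"; simp del: act.simps add: act_ii)
    then show ?thesis using \<open>M u * r * M v = M (u @ [i, i] @ v)\<close> by (simp add: L_M ind_def)
  next
    fix i j assume "r = M [i, j] - M [j, i]" "i > j + 1"
    then have "M u * r * M v = M (u @ [i, j] @ v) - M (u @ [j, i] @ v)"
      by (simp only: M_append mult.assoc left_diff_distrib right_diff_distrib)
    then show ?thesis using act_comm[OF disjI1[OF \<open>i > j + 1\<close>]]
      by (simp add: L_diff fin_M L_M act_append)
  next
    fix i j assume "r = M [i, j] - M [j, i]" "j > i + 1"
    then have "M u * r * M v = M (u @ [i, j] @ v) - M (u @ [j, i] @ v)"
      by (simp only: M_append mult.assoc left_diff_distrib right_diff_distrib)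
    then show ?thesis using act_comm[OF disjI2[OF \<open>j > i + 1\<close>]]
      by (simp add: L_diff fin_M L_M act_append)
  next
    fix i assume "r = M [i, Suc i, i] - M [Suc i, i, Suc i]"
    then have "M u * r * M v = M (u @ [i, Suc i, i] @ v) - M (u @ [Suc i, i, Suc i] @ v)"
      by (simp only: M_append mult.assoc left_diff_distrib right_diff_distrib)
    then show ?thesis using act_braid[of i]
      by (simp add: L_diff fin_M L_M act_append)
  qed
  then show ?case using step fy f2 by (simp add: L_add L_qc finite_subset[OF supp_qc f2])
qed



definition wd :: "nat \<Rightarrow> nat \<Rightarrow> nat list" where "wd j n = rev [j..<Suc n]"

lemma wd_Suc: "j \<le> Suc n \<Longrightarrow> wd j (Suc n) = Suc n # wd j n"
  by (simp add: wd_def)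

lemma wd_self: "wd (Suc n) n = []" by (simp add: wd_def)

lemma set_wd: "set (wd j n) = {j..n}" by (auto simp: wd_def)

lemma wd_pred: "2 \<le> j \<Longrightarrow> j \<le> Suc n \<Longrightarrow> wd j n @ [j - 1] = wd (j - 1) n"
  unfolding wd_def using upt_conv_Cons[of "j - 1" "Suc n"] by simp

lemma wd_Cons_self: "j \<le> n \<Longrightarrow> wd j n = wd (Suc j) n @ [j]"
  unfolding wd_def using upt_conv_Cons[of j "Suc n"] by simp

lemma wd_split: assumes "1 \<le> j" "j < i" "i \<le> n"
  shows "wd j n = wd (Suc i) n @ [i, i - 1] @ wd j (i - 2)"
proof -
  have "[j..<Suc n] = [j..<i - 1] @ [i - 1..<Suc n]"
    using upt_add_eq_append[of j "i - 1" "Suc n - (i - 1)"] assms by simp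
  also have "[i - 1..<Suc n] = [i - 1, i] @ [Suc i..<Suc n]"
    using assms by (simp add: upt_conv_Cons)
  finally have "[j..<Suc n] = [j..<i - 1] @ [i - 1, i] @ [Suc i..<Suc n]" .
  moreover have "Suc (i - 2) = i - 1" using assms by simp
  ultimately show ?thesis unfolding wd_def by simp
qed

lemma rel_comm: "a \<in> {1..<N} \<Longrightarrow> i \<in> {1..<N} \<Longrightarrow> a > i + 1 \<or> i > a + 1 \<Longrightarrow> M [a, i] - M [i, a] \<in> Idl N"
proof -
  assume as: "a \<in> {1..<N}" "i \<in> {1..<N}" "a > i + 1 \<or> i > a + 1"
  have "M [a, i] - M [i, a] \<in> RelsF N" unfolding RelsF_iff
    by (rule disjI2, rule disjI1, rule exI[of _ a], rule exI[of _ i]) (use as in auto)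
  then show ?thesis using Id_gen[of "M [a, i] - M [i, a]" N "[]" "[]"] by (simp add: M_Nil)
qed

lemma rel_braid: "i \<in> {1..<N} \<Longrightarrow> Suc i \<in> {1..<N} \<Longrightarrow> M [i, Suc i, i] - M [Suc i, i, Suc i] \<in> Idl N"
proof -
  assume as: "i \<in> {1..<N}" "Suc i \<in> {1..<N}"
  have "M [i, Suc i, i] - M [Suc i, i, Suc i] \<in> RelsF N" unfolding RelsF_iff
    by (rule disjI2, rule disjI2, rule exI[of _ i]) (use as in auto)
  then show ?thesis using Id_gen[of "M [i, Suc i, i] - M [Suc i, i, Suc i]" N "[]" "[]"] by (simp add: M_Nil)
qed

lemma rel_sq: "i \<in> {1..<N} \<Longrightarrow> M [i, i] \<in> Idl N"
proof -
  assume as: "i \<in> {1..<N}"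
  have "M [i, i] \<in> RelsF N" unfolding RelsF_iff
    by (rule disjI1, rule exI[of _ i]) (use as in auto)
  then show ?thesis using Id_gen[of "M [i, i]" N "[]" "[]"] by (simp add: M_Nil)
qed

lemma ctx: "M a - M b \<in> Idl N \<Longrightarrow> set u \<subseteq> {1..<N} \<Longrightarrow> set v \<subseteq> {1..<N} \<Longrightarrow> M (u @ a @ v) - M (u @ b @ v) \<in> Idl N"
proof -
  assume a: "M a - M b \<in> Idl N" "set u \<subseteq> {1..<N}" "set v \<subseteq> {1..<N}"
  have "M u * (M a - M b) * M v \<in> Idl N" using a by (blast intro: Id_lM Id_rM)
  then show ?thesis by (simp add: M_append algebra_simps)
qed

lemma Id_trans: "x - y \<in> Idl N \<Longrightarrow> y - z \<in> Idl N \<Longrightarrow> x - z \<in> Idl N"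
  using Id_add by fastforce

lemma Id_sym: "x - y \<in> Idl N \<Longrightarrow> y - x \<in> Idl N"
  using Id_uminus by fastforce

lemma comm_Id: "set u \<subseteq> {1..<N} \<Longrightarrow> i \<in> {1..<N} \<Longrightarrow> (\<forall>k\<in>set u. k > i + 1 \<or> i > k + 1)
   \<Longrightarrow> M (u @ [i]) - M (i # u) \<in> Idl N"
proof (induction u)
  case Nil then show ?case by simp
next
  case (Cons a u)
  have 1: "M ([a] @ (u @ [i]) @ []) - M ([a] @ (i # u) @ []) \<in> Idl N"
    by (rule ctx) (use Cons in auto)
  have 2: "M ([] @ [a, i] @ u) - M ([] @ [i, a] @ u) \<in> Idl N"
    by (rule ctx) (use Cons rel_comm in auto)
  show ?case using Id_trans[OF 1[simplified] 2[simplified]] by simp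
qed

lemma exI2: "h \<in> Fr n \<Longrightarrow> t \<in> {1..Suc n} \<Longrightarrow> M w - h * M (wd t n) \<in> Idl (Suc n)
  \<Longrightarrow> \<exists>h t. h \<in> Fr n \<and> t \<in> {1..Suc n} \<and> M w - h * M (wd t n) \<in> Idl (Suc n)" by blast

lemma wd_step:
  assumes j: "1 \<le> j" "j \<le> Suc n" and i: "1 \<le> i" "i \<le> n"
  shows "\<exists>h t. h \<in> Fr n \<and> t \<in> {1..Suc n} \<and> M (wd j n @ [i]) - h * M (wd t n) \<in> Idl (Suc n)"
proof (cases "j = Suc n")
  case True
  show ?thesis
  proof (cases "i = n")
    case True
    have "wd n n = [n]" by (simp add: wd_def)
    then have "M (wd j n @ [i]) - 1 * M (wd n n) \<in> Idl (Suc n)" using \<open>j = Suc n\<close> True by (simp add: wd_self)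
    moreover have "n \<in> {1..Suc n}" using i by simp
    ultimately show ?thesis by - (rule exI2[where h=1 and t=n], simp_all add: FS_one)
  next
    case False
    then have "M [i] \<in> Fr n" using i by (intro FS_M) auto
    moreover have "M (wd j n @ [i]) - M [i] * M (wd (Suc n) n) \<in> Idl (Suc n)"
      using \<open>j = Suc n\<close> by (simp add: wd_self M_Nil)
    ultimately show ?thesis by - (rule exI2[where h="M [i]" and t="Suc n"], simp_all)
  qed
next
  case False
  then have jn: "j \<le> n" using j by simp
  consider "i + 1 = j" | "i = j" | "i + 1 < j" | "j < i" by linarith
  then show ?thesis
  proof cases
    case 1
    have jj: "j = Suc i" using 1 by simp
    have "wd j n @ [i] = wd (j - 1) n" unfolding jj using wd_pred[of "Suc i" n] j i jj by simp
    then have "M (wd j n @ [i]) - 1 * M (wd (j - 1) n) \<in> Idl (Suc n)" by simp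
    moreover have "j - 1 \<in> {1..Suc n}" using i by (simp add: jj)
    ultimately show ?thesis by - (rule exI2[where h=1 and t="j - 1"], simp_all add: FS_one)
  next
    case 2
    have "wd j n @ [i] = wd (Suc j) n @ [j, j]" using wd_Cons_self[OF jn] 2 by simp
    moreover have "M (wd (Suc j) n @ [j, j]) \<in> Idl (Suc n)"
    proof -
      have "set (wd (Suc j) n) \<subseteq> {1..<Suc n}" by (auto simp: set_wd)
      moreover have "j \<in> {1..<Suc n}" using j jn by simp
      ultimately show ?thesis using Id_lM[OF rel_sq[of j "Suc n"], of "wd (Suc j) n"] by (simp add: M_append)
    qed
    ultimately have "M (wd j n @ [i]) - 0 * M (wd j n) \<in> Idl (Suc n)" by simp
    moreover have "j \<in> {1..Suc n}" using j by simp
    ultimately show ?thesis by - (rule exI2[where h=0 and t=j], simp_all)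
  next
    case 3
    have "M (wd j n @ [i]) - M (i # wd j n) \<in> Idl (Suc n)"
      by (rule comm_Id) (use 3 j i in \<open>auto simp: set_wd\<close>)
    moreover have "M (i # wd j n) = M [i] * M (wd j n)" by (simp add: M_append[symmetric])
    moreover have "M [i] \<in> Fr n" using 3 i j by (intro FS_M) auto
    ultimately have "M (wd j n @ [i]) - M [i] * M (wd j n) \<in> Idl (Suc n)" "M [i] \<in> Fr n" by simp_all
    moreover have "j \<in> {1..Suc n}" using j by simp
    ultimately show ?thesis by - (rule exI2[where h="M [i]" and t=j], simp_all)
  next
    case 4
    define A where "A = wd (Suc i) n"
    define B where "B = wd j (i - 2)"
    have wj: "wd j n = A @ [i, i - 1] @ B" unfolding A_def B_def using wd_split[of j i n] 4 j i by simp
    have sA: "set A \<subseteq> {1..<Suc n}" "\<forall>k\<in>set A. k > (i - 1) + 1" unfolding A_def set_wd using i by auto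
    have sB: "set B \<subseteq> {1..<Suc n}" "\<forall>k\<in>set B. i > k + 1" unfolding B_def set_wd using i j 4 by auto
    have s1: "M ((A @ [i, i - 1]) @ (B @ [i]) @ []) - M ((A @ [i, i - 1]) @ (i # B) @ []) \<in> Idl (Suc n)"
      by (rule ctx[OF comm_Id]) (use sA sB i j 4 in auto)
    have s2: "M (A @ [i - 1, Suc (i - 1), i - 1] @ B) - M (A @ [Suc (i - 1), i - 1, Suc (i - 1)] @ B) \<in> Idl (Suc n)"
      by (rule ctx[OF rel_braid]) (use sA sB i j 4 in auto)
    have s3: "M ([] @ (A @ [i - 1]) @ ([i, i - 1] @ B)) - M ([] @ ((i - 1) # A) @ ([i, i - 1] @ B)) \<in> Idl (Suc n)"
      by (rule ctx[OF comm_Id]) (use sA sB i j 4 in auto)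
    have si: "Suc (i - 1) = i" using 4 by simp
    have t1: "M (wd j n @ [i]) - M (A @ [i, i - 1, i] @ B) \<in> Idl (Suc n)"
      using s1 unfolding wj by simp
    have t2: "M (A @ [i, i - 1, i] @ B) - M (A @ [i - 1, i, i - 1] @ B) \<in> Idl (Suc n)"
      using Id_sym[OF s2] unfolding si by simp
    have t3: "M (A @ [i - 1, i, i - 1] @ B) - M ((i - 1) # wd j n) \<in> Idl (Suc n)"
      using s3 unfolding wj by simp
    have "M (wd j n @ [i]) - M ((i - 1) # wd j n) \<in> Idl (Suc n)"
      using Id_trans[OF Id_trans[OF t1 t2] t3] .
    moreover have "M ((i - 1) # wd j n) = M [i - 1] * M (wd j n)" by (simp add: M_append[symmetric])
    moreover have "M [i - 1] \<in> Fr n" using 4 i j by (intro FS_M) auto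
    ultimately have "M (wd j n @ [i]) - M [i - 1] * M (wd j n) \<in> Idl (Suc n)" "M [i - 1] \<in> Fr n" by simp_all
    moreover have "j \<in> {1..Suc n}" using j by simp
    ultimately show ?thesis by - (rule exI2[where h="M [i - 1]" and t=j], simp_all)
  qed
qed

definition spanned :: "nat \<Rightarrow> fr \<Rightarrow> bool" where
  "spanned n x \<longleftrightarrow> (\<exists>g. (\<forall>j. g j \<in> Fr n) \<and> x - (\<Sum>j\<in>{1..Suc n}. g j * M (wd j n)) \<in> Idl (Suc n))"

lemma sp_zero: "spanned n 0"
  unfolding spanned_def by (rule exI[of _ "\<lambda>j. 0"]) simp

lemma sp_add: "spanned n x \<Longrightarrow> spanned n y \<Longrightarrow> spanned n (x + y)"
proof -
  assume "spanned n x" "spanned n y"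
  then obtain g g' where g: "\<forall>j. g j \<in> Fr n" "x - (\<Sum>j\<in>{1..Suc n}. g j * M (wd j n)) \<in> Idl (Suc n)"
    and g': "\<forall>j. g' j \<in> Fr n" "y - (\<Sum>j\<in>{1..Suc n}. g' j * M (wd j n)) \<in> Idl (Suc n)"
    unfolding spanned_def by blast
  have "(x - (\<Sum>j\<in>{1..Suc n}. g j * M (wd j n))) + (y - (\<Sum>j\<in>{1..Suc n}. g' j * M (wd j n))) \<in> Idl (Suc n)"
    using g g' by blast
  then have "x + y - (\<Sum>j\<in>{1..Suc n}. (g j + g' j) * M (wd j n)) \<in> Idl (Suc n)"
    by (simp add: distrib_right sum.distrib algebra_simps)
  then show ?thesis unfolding spanned_def using g g' by (intro exI[of _ "\<lambda>j. g j + g' j"]) auto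
qed

lemma sp_qc: "spanned n x \<Longrightarrow> spanned n (qc c * x)"
proof -
  assume "spanned n x"
  then obtain g where g: "\<forall>j. g j \<in> Fr n" "x - (\<Sum>j\<in>{1..Suc n}. g j * M (wd j n)) \<in> Idl (Suc n)"
    unfolding spanned_def by blast
  have "qc c * (x - (\<Sum>j\<in>{1..Suc n}. g j * M (wd j n))) \<in> Idl (Suc n)" using g by blast
  then have "qc c * x - (\<Sum>j\<in>{1..Suc n}. (qc c * g j) * M (wd j n)) \<in> Idl (Suc n)"
    by (simp only: right_diff_distrib sum_distrib_left mult.assoc)
  then show ?thesis unfolding spanned_def using g by (intro exI[of _ "\<lambda>j. qc c * g j"]) auto
qed

lemma sp_rM: assumes "spanned n x" "1 \<le> i" "i \<le> n" shows "spanned n (x * M [i])"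
proof -
  obtain g where g: "\<forall>j. g j \<in> Fr n" "x - (\<Sum>j\<in>{1..Suc n}. g j * M (wd j n)) \<in> Idl (Suc n)"
    using assms unfolding spanned_def by blast
  have "\<forall>j\<in>{1..Suc n}. \<exists>ht. fst ht \<in> Fr n \<and> snd ht \<in> {1..Suc n} \<and> M (wd j n @ [i]) - fst ht * M (wd (snd ht) n) \<in> Idl (Suc n)"
    using wd_step assms by fastforce
  then obtain ht where ht: "\<forall>j\<in>{1..Suc n}. fst (ht j) \<in> Fr n \<and> snd (ht j) \<in> {1..Suc n} \<and> M (wd j n @ [i]) - fst (ht j) * M (wd (snd (ht j)) n) \<in> Idl (Suc n)"
    by metis
  define h where "h j = fst (ht j)" for j
  define t where "t j = snd (ht j)" for j
  have h: "\<forall>j\<in>{1..Suc n}. h j \<in> Fr n \<and> t j \<in> {1..Suc n} \<and> M (wd j n @ [i]) - h j * M (wd (t j) n) \<in> Idl (Suc n)"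
    using ht unfolding h_def t_def by blast
  define g' where "g' k = (\<Sum>j\<in>{j. j \<in> {1..Suc n} \<and> t j = k}. g j * h j)" for k
  have e1: "x * M [i] - (\<Sum>j\<in>{1..Suc n}. g j * M (wd j n @ [i])) \<in> Idl (Suc n)"
  proof -
    have "(x - (\<Sum>j\<in>{1..Suc n}. g j * M (wd j n))) * M [i] \<in> Idl (Suc n)"
      using g assms by (intro Id_rM) auto
    then show ?thesis by (simp only: left_diff_distrib sum_distrib_right M_append mult.assoc)
  qed
  have e2: "(\<Sum>j\<in>{1..Suc n}. g j * M (wd j n @ [i])) - (\<Sum>j\<in>{1..Suc n}. g j * (h j * M (wd (t j) n))) \<in> Idl (Suc n)"
  proof -
    have "(\<Sum>j\<in>{1..Suc n}. g j * (M (wd j n @ [i]) - h j * M (wd (t j) n))) \<in> Idl (Suc n)"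
      using g h by (intro Id_sum Id_lmul) (auto intro: Fr_Suc Fr_Suc')
    then show ?thesis by (simp add: right_diff_distrib sum_subtractf)
  qed
  have e3: "(\<Sum>j\<in>{1..Suc n}. g j * (h j * M (wd (t j) n))) = (\<Sum>k\<in>{1..Suc n}. g' k * M (wd k n))"
  proof -
    have "(\<Sum>k\<in>{1..Suc n}. g' k * M (wd k n))
        = (\<Sum>k\<in>{1..Suc n}. (\<Sum>j\<in>{j. j \<in> {1..Suc n} \<and> t j = k}. g j * h j * M (wd (t j) n)))"
      unfolding g'_def sum_distrib_right by (rule sum.cong) auto
    also have "\<dots> = (\<Sum>j\<in>{1..Suc n}. g j * h j * M (wd (t j) n))"
      by (rule sum.group) (use h in auto)
    finally show ?thesis by (simp add: mult.assoc)
  qed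
  have "\<forall>k. g' k \<in> Fr n" unfolding g'_def using g h by (auto intro!: FS_sum FS_mult)
  moreover have "x * M [i] - (\<Sum>k\<in>{1..Suc n}. g' k * M (wd k n)) \<in> Idl (Suc n)"
    using Id_trans[OF e1 e2] e3 by simp
  ultimately show ?thesis unfolding spanned_def by blast
qed

lemma sp_M: "set w \<subseteq> {1..<Suc n} \<Longrightarrow> spanned n (M w)"
proof (induction w rule: rev_induct)
  case Nil
  have "(\<Sum>j\<in>{1..Suc n}. (if j = Suc n then 1 else 0) * M (wd j n)) = 1"
    by (simp add: wd_self M_Nil)
  then show ?case unfolding spanned_def M_Nil
    by (intro exI[of _ "\<lambda>j. if j = Suc n then 1 else 0"]) auto
next
  case (snoc a w)
  then show ?case using sp_rM[of n "M w" a] by (simp add: M_append)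
qed

lemma K1: "x \<in> Fr (Suc n) \<Longrightarrow> spanned n x"
proof (induction x rule: FS_induct)
  case zero then show ?case by (rule sp_zero)
next
  case (step y c w) then show ?case by (intro sp_add sp_qc sp_M)
qed



definition incr :: "nat \<Rightarrow> (nat \<Rightarrow> nat) \<Rightarrow> bool" where
  "incr n p \<longleftrightarrow> (\<forall>a b. 1 \<le> a \<longrightarrow> a < b \<longrightarrow> b \<le> n \<longrightarrow> p a < p b)"

definition pj :: "nat \<Rightarrow> nat \<Rightarrow> (nat \<Rightarrow> nat) \<Rightarrow> nat \<Rightarrow> nat" where
  "pj j n p = (\<lambda>k. if k < j then p k else if k \<le> n then p (Suc k) else if k = Suc n then p j else p k)"

lemma incr_Suc: "incr (Suc n) p \<Longrightarrow> incr n p"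
  by (simp add: incr_def)

lemma act_wd: "incr (Suc n) p \<Longrightarrow> 1 \<le> j \<Longrightarrow> j \<le> Suc n \<Longrightarrow> act (wd j n) p = Some (pj j n p)"
proof (induction n arbitrary: j)
  case 0
  then have "j = 1" by simp
  then show ?case by (auto simp: wd_def pj_def fun_eq_iff)
next
  case (Suc n)
  show ?case
  proof (cases "j = Suc (Suc n)")
    case True
    then show ?thesis by (auto simp: wd_self pj_def fun_eq_iff)
  next
    case False
    then have j: "j \<le> Suc n" using Suc by simp
    have IH: "act (wd j n) p = Some (pj j n p)" using Suc.IH[OF incr_Suc[OF Suc.prems(1)] Suc.prems(2) j] .
    have lt: "p j < p (Suc (Suc n))" using Suc.prems j unfolding incr_def by simp
    have "act (wd j (Suc n)) p = act1 (Suc n) (pj j n p)"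
      using IH by (simp add: wd_Suc[OF j])
    also have "\<dots> = Some (pj j (Suc n) p)"
      using lt j by (auto simp: act1_def pj_def fun_eq_iff)
    finally show ?thesis .
  qed
qed

lemma act_untouched: "act w p = Some q \<Longrightarrow> set w \<subseteq> {1..<n} \<Longrightarrow> n < k \<Longrightarrow> q k = p k"
proof (induction w arbitrary: q)
  case Nil then show ?case by simp
next
  case (Cons i w)
  then obtain q' where q': "act w p = Some q'" "act1 i q' = Some q"
    by (cases "act w p") auto
  then have "q' k = p k" using Cons by auto
  moreover have "i < n" using Cons by auto
  ultimately show ?case using q' Cons.prems by (auto simp: act1_def split: if_splits)
qed

lemma L_supp: assumes "x \<in> FS {1..<n}" "L p q x \<noteq> 0" "n < k" shows "q k = p k"
proof -
  from assms(2) obtain w where "w \<in> supp x" "Rep_fr x w * ind (act w p = Some q) \<noteq> 0"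
    unfolding L_def by (meson sum.neutral)
  then have "act w p = Some q" "set w \<subseteq> {1..<n}" using assms(1)
    by (auto simp: ind_def FS_def split: if_splits)
  then show ?thesis using act_untouched assms(3) by blast
qed

lemma incr_pj: "incr (Suc n) p \<Longrightarrow> 1 \<le> j \<Longrightarrow> incr n (pj j n p)"
  unfolding incr_def pj_def
  apply (intro allI impI)
  subgoal for a b
    by (cases "a < j"; cases "b < j") auto
  done

lemma pj_Suc: "j \<le> Suc n \<Longrightarrow> pj j n p (Suc n) = p j" by (simp add: pj_def)

lemma fin_gM: "x \<in> FS A \<Longrightarrow> finite (supp (x * M w))" by (rule fin_mult[OF fin_FS fin_M])

lemma M_wd_Fr: "1 \<le> j \<Longrightarrow> M (wd j n) \<in> Fr (Suc n)"
  by (intro FS_M) (auto simp: set_wd)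

lemma sep:
  assumes IH: "\<And>x p. x \<in> Fr n \<Longrightarrow> incr n p \<Longrightarrow> (\<forall>q. L p q x = 0) \<Longrightarrow> x \<in> Idl n"
    and g: "\<forall>j\<in>{1..Suc n}. g j \<in> Fr n"
    and p: "incr (Suc n) p"
    and L0: "\<forall>q. L p q (\<Sum>j\<in>{1..Suc n}. g j * M (wd j n)) = 0"
    and jz: "jz \<in> {1..Suc n}"
  shows "g jz \<in> Idl n"
proof -
  have fg: "\<And>j. j \<in> {1..Suc n} \<Longrightarrow> finite (supp (g j * M (wd j n)))"
    using g fin_gM by blast
  have Lj: "L p q (g j * M (wd j n)) = L (pj j n p) q (g j)" if "j \<in> {1..Suc n}" for j q
    using L_rmul_M[of "g j" "{1..<n}" p q "wd j n"] g that act_wd[OF p, of j] by simp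
  have "L (pj jz n p) q (g jz) = 0" for q
  proof (cases "q (Suc n) = p jz")
    case True
    have z: "L (pj j n p) q (g j) = 0" if "j \<in> {1..Suc n} - {jz}" for j
    proof (rule ccontr)
      assume "L (pj j n p) q (g j) \<noteq> 0"
      then have "q (Suc n) = pj j n p (Suc n)" using L_supp[of "g j" n] g that by auto
      then have "p j = p jz" using True that by (simp add: pj_Suc)
      moreover have "j \<noteq> jz" using that by simp
      ultimately show False using p that jz unfolding incr_def
        by (metis Diff_iff atLeastAtMost_iff linorder_neqE_nat order_less_irrefl)
    qed
    have "0 = L p q (\<Sum>j\<in>{1..Suc n}. g j * M (wd j n))" using L0 by simp
    also have "\<dots> = (\<Sum>j\<in>{1..Suc n}. L p q (g j * M (wd j n)))"
      by (rule L_sum) (rule fg)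
    also have "\<dots> = (\<Sum>j\<in>{1..Suc n}. L (pj j n p) q (g j))"
      by (rule sum.cong[OF refl]) (rule Lj)
    also have "\<dots> = L (pj jz n p) q (g jz) + (\<Sum>j\<in>{1..Suc n} - {jz}. L (pj j n p) q (g j))"
      by (rule sum.remove) (use jz in auto)
    also have "(\<Sum>j\<in>{1..Suc n} - {jz}. L (pj j n p) q (g j)) = 0"
      using z by simp
    finally show ?thesis by simp
  next
    case False
    show ?thesis
    proof (rule ccontr)
      assume "L (pj jz n p) q (g jz) \<noteq> 0"
      then have "q (Suc n) = pj jz n p (Suc n)" using L_supp[of "g jz" n] g jz by auto
      then show False using False jz by (simp add: pj_Suc)
    qed
  qed
  then show ?thesis using IH[of "g jz" "pj jz n p"] g jz incr_pj[OF p] by auto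
qed

lemma faithful: "x \<in> Fr n \<Longrightarrow> incr n p \<Longrightarrow> (\<forall>q. L p q x = 0) \<Longrightarrow> x \<in> Idl n"
proof (induction n arbitrary: x p)
  case 0
  have s: "supp x \<subseteq> {[]}" using 0 by (auto simp: FS_def)
  have "L p p x = Rep_fr x []"
    by (subst L_sup[where S="{[]}"]) (use s in \<open>auto simp: ind_def\<close>)
  then have "Rep_fr x [] = 0" using 0 by simp
  then have "Rep_fr x = Rep_fr 0" using s by (auto simp: Rep_zero supp_def fun_eq_iff)
  then have "x = 0" by (simp add: Rep_fr_inject)
  then show ?case by simp
next
  case (Suc n)
  obtain g where g: "\<forall>j. g j \<in> Fr n" and d: "x - (\<Sum>j\<in>{1..Suc n}. g j * M (wd j n)) \<in> Idl (Suc n)"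
    using K1[OF Suc.prems(1)] unfolding spanned_def by blast
  let ?S = "\<Sum>j\<in>{1..Suc n}. g j * M (wd j n)"
  have fS: "finite (supp ?S)" using g fin_gM by (intro fin_sum) blast
  have fx: "finite (supp x)" using Suc.prems fin_FS by blast
  have "L p q ?S = 0" for q
  proof -
    have "L p q (x - ?S) = 0" using L_Id[OF d] .
    then show ?thesis using Suc.prems fS fx by (simp add: L_diff)
  qed
  then have L0: "\<forall>q. L p q ?S = 0" by blast
  have gj: "g j \<in> Idl n" if "j \<in> {1..Suc n}" for j
    by (rule sep[OF Suc.IH]) (use g Suc.prems L0 that in auto)
  have "?S \<in> Idl (Suc n)"
    using gj M_wd_Fr by (intro Id_sum Id_rmul Id_Suc) auto
  then have "(x - ?S) + ?S \<in> Idl (Suc n)" using d by blast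
  then show ?case by simp
qed

lemma K2: assumes "\<forall>j\<in>{1..Suc n}. g j \<in> Fr n" "(\<Sum>j\<in>{1..Suc n}. g j * M (wd j n)) \<in> Idl (Suc n)"
    "j \<in> {1..Suc n}"
  shows "g j \<in> Idl n"
proof -
  have "incr (Suc n) id" by (simp add: incr_def)
  moreover have "\<forall>q. L id q (\<Sum>j\<in>{1..Suc n}. g j * M (wd j n)) = 0" using L_Id assms(2) by blast
  ultimately show ?thesis by (intro sep[OF faithful]) (use assms in auto)
qed



section \<open>Generic tensor lemmas\<close>

definition zsupp :: "('m \<times> 'n \<Rightarrow> int) \<Rightarrow> ('m \<times> 'n) set" where "zsupp x = {p. x p \<noteq> 0}"

lemma rel_add: "y \<in> tz_rel MM S N \<Longrightarrow> x \<in> tz_rel MM S N \<Longrightarrow> (\<lambda>q. x q + y q) \<in> tz_rel MM S N"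
proof (induction y rule: tz_rel.induct)
  case zero then show ?case by simp
next
  case (plus y g)
  have "(\<lambda>q. (\<lambda>q. x q + y q) q + g q) \<in> tz_rel MM S N" by (rule tz_rel.plus) (use plus in auto)
  then show ?case by (simp add: add.assoc)
next
  case (minus y g)
  have "(\<lambda>q. (\<lambda>q. x q + y q) q - g q) \<in> tz_rel MM S N" by (rule tz_rel.minus) (use minus in auto)
  then show ?case by (simp add: add_diff_eq)
qed

lemma rel_neg: "x \<in> tz_rel MM S N \<Longrightarrow> (\<lambda>q. - x q) \<in> tz_rel MM S N"
proof (induction x rule: tz_rel.induct)
  case zero then show ?case using tz_rel.zero by simp
next
  case (plus y g)
  have "(\<lambda>q. (\<lambda>q. - y q) q - g q) \<in> tz_rel MM S N" by (rule tz_rel.minus) (use plus in auto)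
  then show ?case by simp
next
  case (minus y g)
  have "(\<lambda>q. (\<lambda>q. - y q) q + g q) \<in> tz_rel MM S N" by (rule tz_rel.plus) (use minus in auto)
  then show ?case by simp
qed

lemma rel_diff: "x \<in> tz_rel MM S N \<Longrightarrow> y \<in> tz_rel MM S N \<Longrightarrow> (\<lambda>q. x q - y q) \<in> tz_rel MM S N"
  using rel_add[OF rel_neg[of y]] by simp

lemma rel_gen: "g \<in> tz_gens MM S N \<Longrightarrow> g \<in> tz_rel MM S N"
  using tz_rel.plus[OF tz_rel.zero, of g] by simp

lemma rel_zero': "(\<lambda>q. 0) \<in> tz_rel MM S N" by (rule tz_rel.zero)

lemma fin_delta: "finite (zsupp (tz_delta p))"
proof -
  have "zsupp (tz_delta p) \<subseteq> {p}" by (auto simp: zsupp_def tz_delta_def)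
  then show ?thesis by (rule finite_subset) simp
qed

lemma zsupp_add: "zsupp (\<lambda>q. x q + y q) \<subseteq> zsupp x \<union> zsupp y" by (auto simp: zsupp_def)
lemma zsupp_diff: "zsupp (\<lambda>q. x q - y q) \<subseteq> zsupp x \<union> zsupp y" by (auto simp: zsupp_def)

lemma fin_add: "finite (zsupp x) \<Longrightarrow> finite (zsupp y) \<Longrightarrow> finite (zsupp (\<lambda>q. x q + y q))"
  using zsupp_add by (metis finite_UnI finite_subset)
lemma fin_diff: "finite (zsupp x) \<Longrightarrow> finite (zsupp y) \<Longrightarrow> finite (zsupp (\<lambda>q. x q - y q))"
  using zsupp_diff by (metis finite_UnI finite_subset)

lemma fin_gen: "g \<in> tz_gens MM S N \<Longrightarrow> finite (zsupp g)"
  unfolding tz_gens_def by (auto intro!: fin_diff fin_delta)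

lemma fin_rel: "x \<in> tz_rel MM S N \<Longrightarrow> finite (zsupp x)"
proof (induction x rule: tz_rel.induct)
  case zero then show ?case by (simp add: zsupp_def)
next
  case (plus x g) then show ?case using fin_gen fin_add by blast
next
  case (minus x g) then show ?case using fin_gen fin_diff by blast
qed

lemma fin_free: "x \<in> tz_free MM N \<Longrightarrow> finite (zsupp x)"
  by (simp add: tz_free_def zsupp_def)

lemma free_zero: "(\<lambda>q. 0) \<in> tz_free MM N" by (simp add: tz_free_def)

lemma free_add: assumes "x \<in> tz_free MM N" "y \<in> tz_free MM N" shows "(\<lambda>q. x q + y q) \<in> tz_free MM N"
  unfolding tz_free_def mem_Collect_eq
proof (intro conjI allI impI)
  show "finite {p. x p + y p \<noteq> 0}" using fin_add[of x y] assms fin_free unfolding zsupp_def by blast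
  fix p assume "x p + y p \<noteq> 0"
  then have "x p \<noteq> 0 \<or> y p \<noteq> 0" by auto
  then show "p \<in> mcarrier MM \<times> mcarrier N" using assms unfolding tz_free_def by blast
qed

lemma free_diff: assumes "x \<in> tz_free MM N" "y \<in> tz_free MM N" shows "(\<lambda>q. x q - y q) \<in> tz_free MM N"
  unfolding tz_free_def mem_Collect_eq
proof (intro conjI allI impI)
  show "finite {p. x p - y p \<noteq> 0}" using fin_diff[of x y] assms fin_free unfolding zsupp_def by blast
  fix p assume "x p - y p \<noteq> 0"
  then have "x p \<noteq> 0 \<or> y p \<noteq> 0" by auto
  then show "p \<in> mcarrier MM \<times> mcarrier N" using assms unfolding tz_free_def by blast
qed

lemma free_delta: "p \<in> mcarrier MM \<times> mcarrier N \<Longrightarrow> tz_delta p \<in> tz_free MM N"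
  unfolding tz_free_def using fin_delta[of p] by (auto simp: zsupp_def tz_delta_def)

lemma cls_self: "x \<in> tz_free MM N \<Longrightarrow> x \<in> tz_cls MM S N x"
  by (simp add: tz_cls_def tz_rel.zero)

lemma cls_eq: "(\<lambda>q. x q - y q) \<in> tz_rel MM S N \<Longrightarrow> tz_cls MM S N x = tz_cls MM S N y"
proof -
  assume a: "(\<lambda>q. x q - y q) \<in> tz_rel MM S N"
  have "(\<lambda>q. x q - z q) \<in> tz_rel MM S N \<longleftrightarrow> (\<lambda>q. y q - z q) \<in> tz_rel MM S N" for z
  proof
    assume "(\<lambda>q. x q - z q) \<in> tz_rel MM S N"
    from rel_diff[OF this a] show "(\<lambda>q. y q - z q) \<in> tz_rel MM S N" by simp
  next
    assume "(\<lambda>q. y q - z q) \<in> tz_rel MM S N"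
    from rel_add[OF this a] show "(\<lambda>q. x q - z q) \<in> tz_rel MM S N" by simp
  qed
  then show ?thesis by (simp add: tz_cls_def)
qed

lemma rep_cls: assumes "x \<in> tz_free MM N"
  shows "rep (tz_cls MM S N x) \<in> tz_free MM N \<and> (\<lambda>q. x q - rep (tz_cls MM S N x) q) \<in> tz_rel MM S N"
proof -
  have "rep (tz_cls MM S N x) \<in> tz_cls MM S N x"
    unfolding rep_def by (rule someI[where P="\<lambda>y. y \<in> tz_cls MM S N x", OF cls_self[OF assms]])
  then show ?thesis by (simp add: tz_cls_def)
qed

lemma cls_rep: assumes "x \<in> tz_free MM N" shows "tz_cls MM S N (rep (tz_cls MM S N x)) = tz_cls MM S N x"
proof (rule cls_eq)
  have "(\<lambda>q. - (x q - rep (tz_cls MM S N x) q)) \<in> tz_rel MM S N"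
    using rel_neg rep_cls[OF assms] by blast
  then show "(\<lambda>q. rep (tz_cls MM S N x) q - x q) \<in> tz_rel MM S N" by simp
qed

definition lin :: "('m \<times> 'n \<Rightarrow> fr) \<Rightarrow> ('m \<times> 'n \<Rightarrow> int) \<Rightarrow> fr" where
  "lin h x = (\<Sum>p\<in>zsupp x. of_int (x p) * h p)"

lemma lin_sup: "finite T \<Longrightarrow> zsupp x \<subseteq> T \<Longrightarrow> lin h x = (\<Sum>p\<in>T. of_int (x p) * h p)"
  unfolding lin_def by (rule sum.mono_neutral_left) (auto simp: zsupp_def)

lemma lin_add: "finite (zsupp x) \<Longrightarrow> finite (zsupp y) \<Longrightarrow> lin h (\<lambda>q. x q + y q) = lin h x + lin h y"
  apply (subst (1 2 3) lin_sup[where T="zsupp x \<union> zsupp y"])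
  using zsupp_add[of x y] by (auto simp: sum.distrib distrib_right)

lemma lin_diff: "finite (zsupp x) \<Longrightarrow> finite (zsupp y) \<Longrightarrow> lin h (\<lambda>q. x q - y q) = lin h x - lin h y"
  apply (subst (1 2 3) lin_sup[where T="zsupp x \<union> zsupp y"])
  using zsupp_diff[of x y] by (auto simp: sum_subtractf left_diff_distrib)

lemma lin_zero: "lin h (\<lambda>q. 0) = 0" by (simp add: lin_def zsupp_def)

lemma lin_delta: "lin h (tz_delta p) = h p"
  by (subst lin_sup[where T="{p}"]) (auto simp: zsupp_def tz_delta_def)

lemma lin_map: assumes "finite (zsupp x)" shows "lin h (tz_map f x) = lin (\<lambda>p. h (f p)) x"
proof -
  have zm: "zsupp (tz_map f x) \<subseteq> f ` zsupp x"
  proof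
    fix q assume "q \<in> zsupp (tz_map f x)"
    then have "(\<Sum>p\<in>{p. x p \<noteq> 0 \<and> f p = q}. x p) \<noteq> 0" by (simp add: zsupp_def tz_map_def)
    then obtain p where "p \<in> {p. x p \<noteq> 0 \<and> f p = q}" by (meson sum.neutral)
    then show "q \<in> f ` zsupp x" by (auto simp: zsupp_def)
  qed
  have "lin h (tz_map f x) = (\<Sum>q\<in>f ` zsupp x. of_int (tz_map f x q) * h q)"
    using assms zm by (intro lin_sup) auto
  also have "\<dots> = (\<Sum>q\<in>f ` zsupp x. (\<Sum>p\<in>{p \<in> zsupp x. f p = q}. of_int (x p) * h (f p)))"
  proof (rule sum.cong[OF refl])
    fix q assume "q \<in> f ` zsupp x"
    have "of_int (tz_map f x q) * h q = (\<Sum>p\<in>{p \<in> zsupp x. f p = q}. of_int (x p)) * h q"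
      by (simp add: tz_map_def zsupp_def)
    also have "\<dots> = (\<Sum>p\<in>{p \<in> zsupp x. f p = q}. of_int (x p) * h (f p))"
      by (simp add: sum_distrib_right)
    finally show "of_int (tz_map f x q) * h q = (\<Sum>p\<in>{p \<in> zsupp x. f p = q}. of_int (x p) * h (f p))" .
  qed
  also have "\<dots> = (\<Sum>p\<in>zsupp x. of_int (x p) * h (f p))"
    by (rule sum.group) (use assms in auto)
  finally show ?thesis by (simp add: lin_def)
qed

lemma lin_lmul: "y * lin h x = lin (\<lambda>p. y * h p) x"
  unfolding lin_def sum_distrib_left
  by (rule sum.cong[OF refl]) (metis mult.assoc mult_of_int_commute)

lemma lin_rmul: "lin h x * y = lin (\<lambda>p. h p * y) x"
  unfolding lin_def sum_distrib_right by (simp add: mult.assoc)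

lemma lin_Fr: "(\<And>p. p \<in> zsupp x \<Longrightarrow> h p \<in> Fr n) \<Longrightarrow> lin h x \<in> Fr n"
  unfolding lin_def by (intro FS_sum FS_mult FS_of_int) auto

lemma lin_cong: "(\<And>p. p \<in> zsupp x \<Longrightarrow> h p - h' p \<in> Idl n) \<Longrightarrow> lin h x - lin h' x \<in> Idl n"
proof -
  assume a: "\<And>p. p \<in> zsupp x \<Longrightarrow> h p - h' p \<in> Idl n"
  have "(\<Sum>p\<in>zsupp x. of_int (x p) * (h p - h' p)) \<in> Idl n"
    using a by (intro Id_sum Id_lmul FS_of_int) auto
  then show ?thesis by (simp add: lin_def right_diff_distrib sum_subtractf)
qed

lemma lin_rel:
  assumes gens: "\<And>g. g \<in> tz_gens MM S N \<Longrightarrow> lin h g \<in> Idl n"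
  shows "x \<in> tz_rel MM S N \<Longrightarrow> lin h x \<in> Idl n"
proof (induction x rule: tz_rel.induct)
  case zero then show ?case by (simp add: lin_zero)
next
  case (plus x g)
  have "lin h (\<lambda>q. x q + g q) = lin h x + lin h g"
    by (rule lin_add[OF fin_rel[OF plus.hyps(1)] fin_gen[OF plus.hyps(2)]])
  then show ?case using plus.IH gens[OF plus.hyps(2)] by (simp add: Id_add)
next
  case (minus x g)
  have "lin h (\<lambda>q. x q - g q) = lin h x - lin h g"
    by (rule lin_diff[OF fin_rel[OF minus.hyps(1)] fin_gen[OF minus.hyps(2)]])
  then show ?case using minus.IH gens[OF minus.hyps(2)] by (simp add: Id_diff)
qed

lemma free_step_nat:
  assumes "y \<in> tz_free MM N" "P y" "p \<in> mcarrier MM \<times> mcarrier N"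
    and st: "\<And>x. x \<in> tz_free MM N \<Longrightarrow> P x \<Longrightarrow> P (\<lambda>q. x q + tz_delta p q) \<and> P (\<lambda>q. x q - tz_delta p q)"
  shows "(\<lambda>q. y q + of_nat k * tz_delta p q) \<in> tz_free MM N \<and> P (\<lambda>q. y q + of_nat k * tz_delta p q)
       \<and> (\<lambda>q. y q - of_nat k * tz_delta p q) \<in> tz_free MM N \<and> P (\<lambda>q. y q - of_nat k * tz_delta p q)"
proof (induction k)
  case 0 then show ?case using assms by simp
next
  case (Suc k)
  let ?a = "\<lambda>q. y q + of_nat k * tz_delta p q"
  let ?b = "\<lambda>q. y q - of_nat k * tz_delta p q"
  have e1: "(\<lambda>q. y q + of_nat (Suc k) * tz_delta p q) = (\<lambda>q. ?a q + tz_delta p q)" by (simp add: algebra_simps)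
  have e2: "(\<lambda>q. y q - of_nat (Suc k) * tz_delta p q) = (\<lambda>q. ?b q - tz_delta p q)" by (simp add: algebra_simps)
  from Suc.IH have a: "?a \<in> tz_free MM N" "P ?a" "?b \<in> tz_free MM N" "P ?b" by auto
  have d: "tz_delta p \<in> tz_free MM N" by (rule free_delta[OF assms(3)])
  have r1: "(\<lambda>q. ?a q + tz_delta p q) \<in> tz_free MM N" by (rule free_add[OF a(1) d])
  have r2: "(\<lambda>q. ?b q - tz_delta p q) \<in> tz_free MM N" by (rule free_diff[OF a(3) d])
  have r3: "P (\<lambda>q. ?a q + tz_delta p q)" using st[OF a(1) a(2)] by (rule conjunct1)
  have r4: "P (\<lambda>q. ?b q - tz_delta p q)" using st[OF a(3) a(4)] by (rule conjunct2)
  show ?case unfolding e1 e2 using r1 r2 r3 r4 by (intro conjI)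
qed

lemma free_induct[consumes 1, case_names zero step]:
  assumes x: "x \<in> tz_free MM N"
    and z: "P (\<lambda>q. 0)"
    and st: "\<And>x p. x \<in> tz_free MM N \<Longrightarrow> P x \<Longrightarrow> p \<in> mcarrier MM \<times> mcarrier N
        \<Longrightarrow> P (\<lambda>q. x q + tz_delta p q) \<and> P (\<lambda>q. x q - tz_delta p q)"
  shows "P x"
proof -
  have fin: "finite (zsupp x)" using x fin_free by blast
  have car: "zsupp x \<subseteq> mcarrier MM \<times> mcarrier N" using x by (auto simp: tz_free_def zsupp_def)
  have claim: "(\<lambda>q. if q \<in> T then x q else 0) \<in> tz_free MM N \<and> P (\<lambda>q. if q \<in> T then x q else 0)"
    if "finite T" "T \<subseteq> zsupp x" for T
    using that
  proof (induction T rule: finite_induct)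
    case empty then show ?case using z free_zero by simp
  next
    case (insert p T)
    let ?y = "\<lambda>q. if q \<in> T then x q else 0"
    have y: "?y \<in> tz_free MM N" "P ?y" using insert by auto
    have pc: "p \<in> mcarrier MM \<times> mcarrier N" using insert car by auto
    have st': "\<And>x. x \<in> tz_free MM N \<Longrightarrow> P x \<Longrightarrow> P (\<lambda>q. x q + tz_delta p q) \<and> P (\<lambda>q. x q - tz_delta p q)"
      using st pc by blast
    show ?case
    proof (cases "x p \<ge> 0")
      case True
      have e: "(\<lambda>q. if q \<in> insert p T then x q else 0) = (\<lambda>q. ?y q + int (nat (x p)) * tz_delta p q)"
        using insert True by (auto simp: fun_eq_iff tz_delta_def)
      show ?thesis unfolding e using free_step_nat[OF y pc st', of "nat (x p)"] by blast
    next
      case False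
      have e: "(\<lambda>q. if q \<in> insert p T then x q else 0) = (\<lambda>q. ?y q - int (nat (- x p)) * tz_delta p q)"
        using insert False by (auto simp: fun_eq_iff tz_delta_def)
      show ?thesis unfolding e using free_step_nat[OF y pc st', of "nat (- x p)"] by blast
    qed
  qed
  have "(\<lambda>q. if q \<in> zsupp x then x q else 0) = x" by (auto simp: zsupp_def fun_eq_iff)
  then show ?thesis using claim[OF fin order_refl] by simp
qed

lemma iso_trans: "bimod_iso RR S MM N \<Longrightarrow> bimod_iso RR S N P \<Longrightarrow> bimod_iso RR S MM P"
proof -
  assume "bimod_iso RR S MM N" "bimod_iso RR S N P"
  then obtain f g where f: "bij_betw f (mcarrier MM) (mcarrier N)"
      "\<forall>x\<in>mcarrier MM. \<forall>y\<in>mcarrier MM. f (madd MM x y) = madd N (f x) (f y)"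
      "\<forall>r\<in>acarrier RR. \<forall>x\<in>mcarrier MM. f (lact MM r x) = lact N r (f x)"
      "\<forall>s\<in>acarrier S. \<forall>x\<in>mcarrier MM. f (ract MM x s) = ract N (f x) s"
    and g: "bij_betw g (mcarrier N) (mcarrier P)"
      "\<forall>x\<in>mcarrier N. \<forall>y\<in>mcarrier N. g (madd N x y) = madd P (g x) (g y)"
      "\<forall>r\<in>acarrier RR. \<forall>x\<in>mcarrier N. g (lact N r x) = lact P r (g x)"
      "\<forall>s\<in>acarrier S. \<forall>x\<in>mcarrier N. g (ract N x s) = ract P (g x) s"
    unfolding bimod_iso_def by blast
  have fm: "\<And>x. x \<in> mcarrier MM \<Longrightarrow> f x \<in> mcarrier N" using f(1) bij_betwE by blast
  show ?thesis unfolding bimod_iso_def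
    apply (rule exI[of _ "g \<circ> f"])
    using bij_betw_trans[OF f(1) g(1)] f g fm by simp
qed

lemma iso_sym:
  assumes "bimod_iso RR S MM N"
    and cadd: "\<And>x y. x \<in> mcarrier MM \<Longrightarrow> y \<in> mcarrier MM \<Longrightarrow> madd MM x y \<in> mcarrier MM"
    and cl: "\<And>r x. r \<in> acarrier RR \<Longrightarrow> x \<in> mcarrier MM \<Longrightarrow> lact MM r x \<in> mcarrier MM"
    and cr: "\<And>s x. s \<in> acarrier S \<Longrightarrow> x \<in> mcarrier MM \<Longrightarrow> ract MM x s \<in> mcarrier MM"
  shows "bimod_iso RR S N MM"
proof -
  obtain f where f: "bij_betw f (mcarrier MM) (mcarrier N)"
      "\<forall>x\<in>mcarrier MM. \<forall>y\<in>mcarrier MM. f (madd MM x y) = madd N (f x) (f y)"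
      "\<forall>r\<in>acarrier RR. \<forall>x\<in>mcarrier MM. f (lact MM r x) = lact N r (f x)"
      "\<forall>s\<in>acarrier S. \<forall>x\<in>mcarrier MM. f (ract MM x s) = ract N (f x) s"
    using assms(1) unfolding bimod_iso_def by blast
  define g where "g = inv_into (mcarrier MM) f"
  have gb: "bij_betw g (mcarrier N) (mcarrier MM)" unfolding g_def by (rule bij_betw_inv_into[OF f(1)])
  have gm: "\<And>a. a \<in> mcarrier N \<Longrightarrow> g a \<in> mcarrier MM" using gb bij_betwE by blast
  have fg: "\<And>a. a \<in> mcarrier N \<Longrightarrow> f (g a) = a" unfolding g_def using f(1)
    by (simp add: bij_betw_inv_into_right)
  have gf: "\<And>x. x \<in> mcarrier MM \<Longrightarrow> g (f x) = x" unfolding g_def using f(1)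
    by (simp add: bij_betw_inv_into_left)
  show ?thesis unfolding bimod_iso_def
  proof (intro exI[of _ g] conjI ballI)
    show "bij_betw g (mcarrier N) (mcarrier MM)" by (rule gb)
  next
    fix a b assume "a \<in> mcarrier N" "b \<in> mcarrier N"
    then show "g (madd N a b) = madd MM (g a) (g b)"
      using f(2) gm fg gf cadd by metis
  next
    fix r a assume "r \<in> acarrier RR" "a \<in> mcarrier N"
    then show "g (lact N r a) = lact MM r (g a)"
      using f(3) gm fg gf cl by metis
  next
    fix s a assume "s \<in> acarrier S" "a \<in> mcarrier N"
    then show "g (ract N a s) = ract MM (g a) s"
      using f(4) gm fg gf cr by metis
  qed
qed



abbreviation Acar :: "nat \<Rightarrow> fa set set" where "Acar n \<equiv> acarrier (nilcox n)"

lemma HA: "a \<in> Acar n \<Longrightarrow> b \<in> Acar n \<Longrightarrow> aadd (nilcox n) a b \<in> Acar n \<and> R (aadd (nilcox n) a b) - (R a + R b) \<in> Idl n"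
proof -
  assume a: "a \<in> Acar n" "b \<in> Acar n"
  have e: "aadd (nilcox n) a b = cl n (R a + R b)"
    using aadd_cl[OF R_Fr[OF a(1)] R_Fr[OF a(2)]] cl_R[OF a(1)] cl_R[OF a(2)] by simp
  have f: "R a + R b \<in> Fr n" using R_Fr a by blast
  show ?thesis unfolding e using cl_in[OF f] R_cl_Id[OF f] by simp
qed

lemma HM: "a \<in> Acar n \<Longrightarrow> b \<in> Acar n \<Longrightarrow> amul (nilcox n) a b \<in> Acar n \<and> R (amul (nilcox n) a b) - R a * R b \<in> Idl n"
proof -
  assume a: "a \<in> Acar n" "b \<in> Acar n"
  have e: "amul (nilcox n) a b = cl n (R a * R b)"
    using amul_cl[OF R_Fr[OF a(1)] R_Fr[OF a(2)]] cl_R[OF a(1)] cl_R[OF a(2)] by simp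
  have f: "R a * R b \<in> Fr n" using R_Fr a by blast
  show ?thesis unfolding e using cl_in[OF f] R_cl_Id[OF f] by simp
qed

lemma HC: "r \<in> Acar n \<Longrightarrow> nc_chi n r \<in> Acar (Suc n) \<and> R (nc_chi n r) - R r \<in> Idl (Suc n)"
proof -
  assume a: "r \<in> Acar n"
  have f: "R r \<in> Fr n" using R_Fr a by blast
  have e: "nc_chi n r = cl (Suc n) (R r)" using chi_cl[OF f] cl_R[OF a] by simp
  show ?thesis unfolding e using cl_in[OF Fr_Suc[OF f]] R_cl_Id[OF Fr_Suc[OF f]] by simp
qed

lemma H0: "azero (nilcox n) \<in> Acar n \<and> R (azero (nilcox n)) \<in> Idl n"
  using R_cl_Id[of 0 n] cl_in[of 0 n] by (simp add: azero_cl)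

lemma H1: "aone (nilcox n) \<in> Acar n \<and> R (aone (nilcox n)) - 1 \<in> Idl n"
  using R_cl_Id[of 1 n] cl_in[of 1 n] by (simp add: aone_cl FS_one)

lemma R_eq: "a \<in> Acar n \<Longrightarrow> b \<in> Acar n \<Longrightarrow> R a - R b \<in> Idl n \<Longrightarrow> a = b"
  by (metis R_Fr cl_R cl_eq)

lemma Id_mono_le: "x \<in> Idl n \<Longrightarrow> n \<le> m \<Longrightarrow> x \<in> Idl m"
  by (induction m) (auto simp: le_Suc_eq intro: Id_Suc)

lemma Fr_mono_le: "x \<in> Fr n \<Longrightarrow> n \<le> m \<Longrightarrow> x \<in> Fr m"
  by (induction m) (auto simp: le_Suc_eq intro: Fr_Suc Fr_Suc')

lemma regbimod_simps[simp]:
  "mcarrier (regbimod A \<phi> \<psi>) = acarrier A"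
  "madd (regbimod A \<phi> \<psi>) = aadd A"
  "lact (regbimod A \<phi> \<psi>) r a = amul A (\<phi> r) a"
  "ract (regbimod A \<phi> \<psi>) a s = amul A a (\<psi> s)"
  by (simp_all add: regbimod_def)

lemma tensor_simps[simp]:
  "mcarrier (tensor MM S NN) = tz_cls MM S NN ` tz_free MM NN"
  "madd (tensor MM S NN) X Y = tz_cls MM S NN (\<lambda>q. rep X q + rep Y q)"
  "lact (tensor MM S NN) r X = tz_cls MM S NN (tz_map (\<lambda>(m, n). (lact MM r m, n)) (rep X))"
  "ract (tensor MM S NN) X t = tz_cls MM S NN (tz_map (\<lambda>(m, n). (m, ract NN n t)) (rep X))"
  by (simp_all add: tensor_def)

lemma dsum_simps[simp]:
  "mcarrier (dsum MM NN) = mcarrier MM \<times> mcarrier NN"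
  "madd (dsum MM NN) (x, y) (x', y') = (madd MM x x', madd NN y y')"
  "lact (dsum MM NN) r (x, y) = (lact MM r x, lact NN r y)"
  "ract (dsum MM NN) (x, y) s = (ract MM x s, ract NN y s)"
  by (simp_all add: dsum_def)

definition zeq :: "('r, 's, 'm) bimod \<Rightarrow> 's alg \<Rightarrow> ('s, 't, 'n) bimod \<Rightarrow> ('m \<times> 'n \<Rightarrow> int) \<Rightarrow> ('m \<times> 'n \<Rightarrow> int) \<Rightarrow> bool" where
  "zeq MM S NN x y \<longleftrightarrow> (\<lambda>q. x q - y q) \<in> tz_rel MM S NN"

lemma zeq_refl: "zeq MM S NN x x" by (simp add: zeq_def tz_rel.zero)

lemma zeq_sym: "zeq MM S NN x y \<Longrightarrow> zeq MM S NN y x"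
  unfolding zeq_def using rel_neg by fastforce

lemma zeq_trans: "zeq MM S NN x y \<Longrightarrow> zeq MM S NN y z \<Longrightarrow> zeq MM S NN x z"
  unfolding zeq_def using rel_add by fastforce

lemma zeq_add: "zeq MM S NN x x' \<Longrightarrow> zeq MM S NN y y' \<Longrightarrow> zeq MM S NN (\<lambda>q. x q + y q) (\<lambda>q. x' q + y' q)"
proof -
  assume "zeq MM S NN x x'" "zeq MM S NN y y'"
  then have "(\<lambda>q. (x q - x' q) + (y q - y' q)) \<in> tz_rel MM S NN" unfolding zeq_def using rel_add by fastforce
  then show ?thesis unfolding zeq_def by (simp add: algebra_simps)
qed

lemma zeq_neg: "zeq MM S NN x x' \<Longrightarrow> zeq MM S NN (\<lambda>q. - x q) (\<lambda>q. - x' q)"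
proof -
  assume "zeq MM S NN x x'"
  then have "(\<lambda>q. - (x q - x' q)) \<in> tz_rel MM S NN" unfolding zeq_def using rel_neg by fastforce
  then show ?thesis unfolding zeq_def by (simp add: algebra_simps)
qed

lemma zeq_sum: "(\<And>j. j \<in> J \<Longrightarrow> zeq MM S NN (x j) (y j)) \<Longrightarrow> zeq MM S NN (\<lambda>q. \<Sum>j\<in>J. x j q) (\<lambda>q. \<Sum>j\<in>J. y j q)"
proof (induction J rule: infinite_finite_induct)
  case (infinite A) then show ?case by (simp add: zeq_refl)
next
  case empty then show ?case by (simp add: zeq_refl)
next
  case (insert a F)
  have "zeq MM S NN (\<lambda>q. x a q + (\<Sum>j\<in>F. x j q)) (\<lambda>q. y a q + (\<Sum>j\<in>F. y j q))"
    using insert by (intro zeq_add) auto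
  then show ?case using insert by simp
qed

lemma zeq_trans_eq: "zeq MM S NN x y \<Longrightarrow> y = y' \<Longrightarrow> zeq MM S NN y' z \<Longrightarrow> zeq MM S NN x z"
  using zeq_trans by blast

lemma zeq_eq_left: "x = x' \<Longrightarrow> zeq MM S NN x z \<Longrightarrow> zeq MM S NN x' z"
  by simp

lemma zeq_cls: "zeq MM S NN x y \<Longrightarrow> tz_cls MM S NN x = tz_cls MM S NN y"
  by (simp add: zeq_def cls_eq)

lemma zeq_gen1: "m \<in> mcarrier MM \<Longrightarrow> m' \<in> mcarrier MM \<Longrightarrow> n \<in> mcarrier NN \<Longrightarrow>
   zeq MM S NN (tz_delta (madd MM m m', n)) (\<lambda>q. tz_delta (m, n) q + tz_delta (m', n) q)"
proof -
  assume a: "m \<in> mcarrier MM" "m' \<in> mcarrier MM" "n \<in> mcarrier NN"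
  have "(\<lambda>q. tz_delta (madd MM m m', n) q - tz_delta (m, n) q - tz_delta (m', n) q) \<in> tz_gens MM S NN"
    unfolding tz_gens_def using a by blast
  then show ?thesis unfolding zeq_def using rel_gen by (simp add: algebra_simps)
qed

lemma zeq_gen2: "m \<in> mcarrier MM \<Longrightarrow> n \<in> mcarrier NN \<Longrightarrow> n' \<in> mcarrier NN \<Longrightarrow>
   zeq MM S NN (tz_delta (m, madd NN n n')) (\<lambda>q. tz_delta (m, n) q + tz_delta (m, n') q)"
proof -
  assume a: "m \<in> mcarrier MM" "n \<in> mcarrier NN" "n' \<in> mcarrier NN"
  have "(\<lambda>q. tz_delta (m, madd NN n n') q - tz_delta (m, n) q - tz_delta (m, n') q) \<in> tz_gens MM S NN"
    unfolding tz_gens_def using a by blast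
  then show ?thesis unfolding zeq_def using rel_gen by (simp add: algebra_simps)
qed

lemma zeq_gen3: "m \<in> mcarrier MM \<Longrightarrow> s \<in> acarrier S \<Longrightarrow> n \<in> mcarrier NN \<Longrightarrow>
   zeq MM S NN (tz_delta (ract MM m s, n)) (tz_delta (m, lact NN s n))"
proof -
  assume a: "m \<in> mcarrier MM" "s \<in> acarrier S" "n \<in> mcarrier NN"
  have "(\<lambda>q. tz_delta (ract MM m s, n) q - tz_delta (m, lact NN s n) q) \<in> tz_gens MM S NN"
    unfolding tz_gens_def using a by blast
  then show ?thesis unfolding zeq_def by (rule rel_gen)
qed

lemma spanning:
  fixes MM :: "('r, 's, 'm) bimod" and NN :: "('s, 't, 'n) bimod"
  assumes fJ: "finite J"
    and zc: "z \<in> mcarrier MM" and zz: "madd MM z z = z"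
    and ng: "\<And>m. m \<in> mcarrier MM \<Longrightarrow> ng m \<in> mcarrier MM \<and> madd MM m (ng m) = z"
    and ac: "\<And>m m'. m \<in> mcarrier MM \<Longrightarrow> m' \<in> mcarrier MM \<Longrightarrow> madd MM m m' \<in> mcarrier MM"
    and ec: "\<And>j. j \<in> J \<Longrightarrow> e j \<in> mcarrier NN"
    and A2: "\<And>b c. b \<in> mcarrier MM \<Longrightarrow> c \<in> mcarrier NN \<Longrightarrow>
        \<exists>b'. (\<forall>j\<in>J. b' j \<in> mcarrier MM) \<and> zeq MM S NN (tz_delta (b, c)) (\<lambda>q. \<Sum>j\<in>J. tz_delta (b' j, e j) q)"
    and x: "x \<in> tz_free MM NN"
  shows "\<exists>b. (\<forall>j\<in>J. b j \<in> mcarrier MM) \<and> zeq MM S NN x (\<lambda>q. \<Sum>j\<in>J. tz_delta (b j, e j) q)"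
proof -
  have d0: "zeq MM S NN (tz_delta (z, n)) (\<lambda>q. 0)" if "n \<in> mcarrier NN" for n
  proof -
    have "zeq MM S NN (tz_delta (z, n)) (\<lambda>q. tz_delta (z, n) q + tz_delta (z, n) q)"
      using zeq_gen1[OF zc zc that, of S] zz by simp
    then have "zeq MM S NN (\<lambda>q. tz_delta (z, n) q - tz_delta (z, n) q) (\<lambda>q. (tz_delta (z, n) q + tz_delta (z, n) q) - tz_delta (z, n) q)"
      unfolding zeq_def by simp
    then show ?thesis unfolding zeq_def using rel_neg by fastforce
  qed
  have dn: "zeq MM S NN (tz_delta (ng m, n)) (\<lambda>q. - tz_delta (m, n) q)" if "m \<in> mcarrier MM" "n \<in> mcarrier NN" for m n
  proof -
    have "zeq MM S NN (\<lambda>q. tz_delta (m, n) q + tz_delta (ng m, n) q) (tz_delta (z, n))"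
      using zeq_sym[OF zeq_gen1[OF that(1) conjunct1[OF ng[OF that(1)]] that(2), of S]] ng[OF that(1)] by simp
    then have "zeq MM S NN (\<lambda>q. tz_delta (m, n) q + tz_delta (ng m, n) q) (\<lambda>q. 0)"
      using zeq_trans d0[OF that(2)] by blast
    then show ?thesis unfolding zeq_def by (simp add: algebra_simps)
  qed
  show ?thesis
    using x
  proof (induction x rule: free_induct)
    case zero
    have "zeq MM S NN (\<lambda>q. \<Sum>j\<in>J. tz_delta (z, e j) q) (\<lambda>q. \<Sum>j\<in>J. (\<lambda>j q. 0) j q)"
      by (rule zeq_sum) (use d0 ec in auto)
    then have "zeq MM S NN (\<lambda>q. 0) (\<lambda>q. \<Sum>j\<in>J. tz_delta (z, e j) q)"
      using zeq_sym by fastforce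
    then show ?case using zc by (intro exI[of _ "\<lambda>j. z"]) simp
  next
    case (step x p)
    obtain b where b: "\<forall>j\<in>J. b j \<in> mcarrier MM" "zeq MM S NN x (\<lambda>q. \<Sum>j\<in>J. tz_delta (b j, e j) q)"
      using step by blast
    obtain b' where b': "\<forall>j\<in>J. b' j \<in> mcarrier MM" "zeq MM S NN (tz_delta p) (\<lambda>q. \<Sum>j\<in>J. tz_delta (b' j, e j) q)"
      using A2[of "fst p" "snd p"] step by auto
    have A1: "zeq MM S NN (\<lambda>q. x q + tz_delta p q) (\<lambda>q. (\<Sum>j\<in>J. tz_delta (b j, e j) q) + (\<Sum>j\<in>J. tz_delta (b' j, e j) q))"
      using zeq_add[OF b(2) b'(2)] .
    have B1: "zeq MM S NN (\<lambda>q. \<Sum>j\<in>J. tz_delta (b j, e j) q + tz_delta (b' j, e j) q) (\<lambda>q. \<Sum>j\<in>J. tz_delta (madd MM (b j) (b' j), e j) q)"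
      by (rule zeq_sum, rule zeq_sym, rule zeq_gen1) (use b b' ec in auto)
    have plus: "zeq MM S NN (\<lambda>q. x q + tz_delta p q) (\<lambda>q. \<Sum>j\<in>J. tz_delta (madd MM (b j) (b' j), e j) q)"
      by (rule zeq_trans_eq[OF A1 _ B1]) (simp add: fun_eq_iff sum.distrib)
    have A2: "zeq MM S NN (\<lambda>q. x q + - tz_delta p q) (\<lambda>q. (\<Sum>j\<in>J. tz_delta (b j, e j) q) + - (\<Sum>j\<in>J. tz_delta (b' j, e j) q))"
      using zeq_add[OF b(2) zeq_neg[OF b'(2)]] .
    have B2: "zeq MM S NN (\<lambda>q. \<Sum>j\<in>J. tz_delta (b j, e j) q + - tz_delta (b' j, e j) q) (\<lambda>q. \<Sum>j\<in>J. tz_delta (b j, e j) q + tz_delta (ng (b' j), e j) q)"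
      by (rule zeq_sum, rule zeq_add[OF zeq_refl], rule zeq_sym, rule dn) (use b' ec in auto)
    have C2: "zeq MM S NN (\<lambda>q. \<Sum>j\<in>J. tz_delta (b j, e j) q + tz_delta (ng (b' j), e j) q) (\<lambda>q. \<Sum>j\<in>J. tz_delta (madd MM (b j) (ng (b' j)), e j) q)"
      by (rule zeq_sum, rule zeq_sym, rule zeq_gen1) (use b b' ec ng in auto)
    have minus0: "zeq MM S NN (\<lambda>q. x q + - tz_delta p q) (\<lambda>q. \<Sum>j\<in>J. tz_delta (madd MM (b j) (ng (b' j)), e j) q)"
      by (rule zeq_trans_eq[OF A2 _ zeq_trans[OF B2 C2]]) (simp add: fun_eq_iff sum.distrib sum_negf sum_subtractf)
    have minus: "zeq MM S NN (\<lambda>q. x q - tz_delta p q) (\<lambda>q. \<Sum>j\<in>J. tz_delta (madd MM (b j) (ng (b' j)), e j) q)"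
      by (rule zeq_eq_left[OF _ minus0]) simp
    have c1: "\<forall>j\<in>J. madd MM (b j) (b' j) \<in> mcarrier MM" using b b' ac by blast
    have c2: "\<forall>j\<in>J. madd MM (b j) (ng (b' j)) \<in> mcarrier MM" using b b' ac ng by blast
    have r1: "\<exists>b. (\<forall>j\<in>J. b j \<in> mcarrier MM) \<and> zeq MM S NN (\<lambda>q. x q + tz_delta p q) (\<lambda>q. \<Sum>j\<in>J. tz_delta (b j, e j) q)"
      by (rule exI[of _ "\<lambda>j. madd MM (b j) (b' j)"]) (use plus c1 in simp)
    have r2: "\<exists>b. (\<forall>j\<in>J. b j \<in> mcarrier MM) \<and> zeq MM S NN (\<lambda>q. x q - tz_delta p q) (\<lambda>q. \<Sum>j\<in>J. tz_delta (b j, e j) q)"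
      by (rule exI[of _ "\<lambda>j. madd MM (b j) (ng (b' j))"]) (use minus c2 in simp)
    show ?case using r1 r2 by (rule conjI)
  qed
qed

lemma lin_gens:
  assumes g1: "\<And>m m' n. m \<in> mcarrier MM \<Longrightarrow> m' \<in> mcarrier MM \<Longrightarrow> n \<in> mcarrier NN \<Longrightarrow>
        h (madd MM m m', n) - h (m, n) - h (m', n) \<in> Idl K"
    and g2: "\<And>m n n'. m \<in> mcarrier MM \<Longrightarrow> n \<in> mcarrier NN \<Longrightarrow> n' \<in> mcarrier NN \<Longrightarrow>
        h (m, madd NN n n') - h (m, n) - h (m, n') \<in> Idl K"
    and g3: "\<And>m s n. m \<in> mcarrier MM \<Longrightarrow> s \<in> acarrier S \<Longrightarrow> n \<in> mcarrier NN \<Longrightarrow>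
        h (ract MM m s, n) - h (m, lact NN s n) \<in> Idl K"
    and g: "g \<in> tz_gens MM S NN"
  shows "lin h g \<in> Idl K"
  using g unfolding tz_gens_def
proof (elim UnE CollectE exE conjE)
  fix m m' n assume "g = (\<lambda>q. tz_delta (madd MM m m', n) q - tz_delta (m, n) q - tz_delta (m', n) q)"
    "m \<in> mcarrier MM" "m' \<in> mcarrier MM" "n \<in> mcarrier NN"
  then show "lin h g \<in> Idl K" using g1 by (simp add: lin_diff fin_delta fin_diff lin_delta)
next
  fix m n n' assume "g = (\<lambda>q. tz_delta (m, madd NN n n') q - tz_delta (m, n) q - tz_delta (m, n') q)"
    "m \<in> mcarrier MM" "n \<in> mcarrier NN" "n' \<in> mcarrier NN"
  then show "lin h g \<in> Idl K" using g2 by (simp add: lin_diff fin_delta fin_diff lin_delta)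
next
  fix m s n assume "g = (\<lambda>q. tz_delta (ract MM m s, n) q - tz_delta (m, lact NN s n) q)"
    "m \<in> mcarrier MM" "s \<in> acarrier S" "n \<in> mcarrier NN"
  then show "lin h g \<in> Idl K" using g3 by (simp add: lin_diff fin_delta lin_delta)
qed

lemma free_map: "x \<in> tz_free MM NN \<Longrightarrow> (\<And>p. p \<in> mcarrier MM \<times> mcarrier NN \<Longrightarrow> f p \<in> mcarrier MM \<times> mcarrier NN)
   \<Longrightarrow> tz_map f x \<in> tz_free MM NN"
proof -
  assume x: "x \<in> tz_free MM NN" and f: "\<And>p. p \<in> mcarrier MM \<times> mcarrier NN \<Longrightarrow> f p \<in> mcarrier MM \<times> mcarrier NN"
  have zm: "{q. tz_map f x q \<noteq> 0} \<subseteq> f ` zsupp x"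
  proof
    fix q assume "q \<in> {q. tz_map f x q \<noteq> 0}"
    then have "(\<Sum>p\<in>{p. x p \<noteq> 0 \<and> f p = q}. x p) \<noteq> 0" by (simp add: tz_map_def)
    then obtain p where "p \<in> {p. x p \<noteq> 0 \<and> f p = q}" by (meson sum.neutral)
    then show "q \<in> f ` zsupp x" by (auto simp: zsupp_def)
  qed
  have xc: "\<forall>p. x p \<noteq> 0 \<longrightarrow> p \<in> mcarrier MM \<times> mcarrier NN" using x unfolding tz_free_def by blast
  have "f ` zsupp x \<subseteq> mcarrier MM \<times> mcarrier NN" using f xc unfolding zsupp_def by blast
  moreover have "finite (f ` zsupp x)" using fin_free[OF x] by simp
  ultimately have fin: "finite {q. tz_map f x q \<noteq> 0}" and sub: "{q. tz_map f x q \<noteq> 0} \<subseteq> mcarrier MM \<times> mcarrier NN"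
    using zm by (blast intro: finite_subset)+
  show ?thesis unfolding tz_free_def mem_Collect_eq
  proof (intro conjI allI impI)
    show "finite {q. tz_map f x q \<noteq> 0}" by (rule fin)
    fix q assume "tz_map f x q \<noteq> 0"
    then show "q \<in> mcarrier MM \<times> mcarrier NN" using sub by blast
  qed
qed



lemma lin_rep_gen:
  assumes gens: "\<And>g. g \<in> tz_gens MM S NN \<Longrightarrow> lin h g \<in> Idl K"
    and x: "x \<in> tz_free MM NN"
  shows "lin h x - lin h (rep (tz_cls MM S NN x)) \<in> Idl K"
proof -
  have r: "rep (tz_cls MM S NN x) \<in> tz_free MM NN" "(\<lambda>q. x q - rep (tz_cls MM S NN x) q) \<in> tz_rel MM S NN"
    using rep_cls[OF x] by auto
  have "lin h (\<lambda>q. x q - rep (tz_cls MM S NN x) q) \<in> Idl K" by (rule lin_rel[OF gens r(2)])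
  then show ?thesis using fin_free[OF x] fin_free[OF r(1)] by (simp add: lin_diff)
qed

lemma carrier_tensor_E:
  "X \<in> mcarrier (tensor MM S NN) \<Longrightarrow> rep X \<in> tz_free MM NN \<and> tz_cls MM S NN (rep X) = X"
  using rep_cls cls_rep by fastforce

lemma R_Fr': "X \<in> Acar n \<Longrightarrow> R X \<in> FS {Suc 0..<n}"
  using R_Fr by simp

lemma zsupp_car: "x \<in> tz_free MM NN \<Longrightarrow> p \<in> zsupp x \<Longrightarrow> fst p \<in> mcarrier MM \<and> snd p \<in> mcarrier NN"
  unfolding tz_free_def zsupp_def by (cases p) auto

lemma cl_eqI: "x - y \<in> Idl n \<Longrightarrow> cl n x = cl n y" by (rule cl_eq)

lemma Dmod_Suc: "Dmod (Suc n) = regbimod (nilcox (Suc n)) (nc_chi n) id"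
  by (simp add: Dmod_def)

lemma amul_one: "c \<in> Acar n \<Longrightarrow> amul (nilcox n) c (aone (nilcox n)) = c"
proof -
  assume c: "c \<in> Acar n"
  have "R (amul (nilcox n) c (aone (nilcox n))) - R c * R (aone (nilcox n)) \<in> Idl n" using HM[OF c] H1 by blast
  moreover have "R c * (R (aone (nilcox n)) - 1) \<in> Idl n" using H1 R_Fr[OF c] by blast
  ultimately have "R (amul (nilcox n) c (aone (nilcox n))) - R c \<in> Idl n"
    using Id_add by (fastforce simp: algebra_simps)
  then show ?thesis using R_eq HM[OF c] H1 c by blast
qed

section \<open>Step 1: D_(n+1) tensor X_n is A_(n+1)\<close>

context fixes n :: nat
begin

abbreviation "DD \<equiv> Dmod (Suc n)"
abbreviation "XX \<equiv> Xmod n"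
abbreviation "AA \<equiv> nilcox (Suc n)"
abbreviation "M1 \<equiv> regbimod (nilcox (Suc n)) (nc_chi n) (nc_chi n)"

definition h1 :: "fa set \<times> fa set \<Rightarrow> fr" where "h1 p = R (fst p) * R (snd p)"

lemma XX_simps[simp]: "mcarrier XX = Acar (Suc n)" "lact XX r a = amul AA r a" "ract XX a s = amul AA a (nc_chi n s)"
  "madd XX = aadd AA"
  by (simp_all add: Xmod_def)
lemma DD_simps[simp]: "mcarrier DD = Acar (Suc n)" "lact DD r a = amul AA (nc_chi n r) a" "ract DD a s = amul AA a s"
  "madd DD = aadd AA"
  by (simp_all add: Dmod_Suc)

lemma h1_gens: "g \<in> tz_gens DD AA XX \<Longrightarrow> lin h1 g \<in> Idl (Suc n)"
proof (rule lin_gens)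
  fix m m' k assume a: "m \<in> mcarrier DD" "m' \<in> mcarrier DD" "k \<in> mcarrier XX"
  have "(R (aadd AA m m') - (R m + R m')) * R k \<in> Idl (Suc n)"
    using HA[of m "Suc n" m'] a R_Fr[of k] by (intro Id_rmul) auto
  then show "h1 (madd DD m m', k) - h1 (m, k) - h1 (m', k) \<in> Idl (Suc n)"
    by (simp add: h1_def algebra_simps)
next
  fix m k k' assume a: "m \<in> mcarrier DD" "k \<in> mcarrier XX" "k' \<in> mcarrier XX"
  have "R m * (R (aadd AA k k') - (R k + R k')) \<in> Idl (Suc n)"
    using HA[of k "Suc n" k'] a R_Fr[of m] by (intro Id_lmul) auto
  then show "h1 (m, madd XX k k') - h1 (m, k) - h1 (m, k') \<in> Idl (Suc n)"
    by (simp add: h1_def algebra_simps)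
next
  fix m s k assume a: "m \<in> mcarrier DD" "s \<in> acarrier AA" "k \<in> mcarrier XX"
  have 1: "(R (amul AA m s) - R m * R s) * R k \<in> Idl (Suc n)"
    using HM[of m "Suc n" s] a R_Fr[of k] by (intro Id_rmul) auto
  have 2: "R m * (R (amul AA s k) - R s * R k) \<in> Idl (Suc n)"
    using HM[of s "Suc n" k] a R_Fr[of m] by (intro Id_lmul) auto
  have "(R (amul AA m s) - R m * R s) * R k - R m * (R (amul AA s k) - R s * R k) \<in> Idl (Suc n)"
    using 1 2 by blast
  then show "h1 (ract DD m s, k) - h1 (m, lact XX s k) \<in> Idl (Suc n)"
    by (simp add: h1_def algebra_simps)
qed

definition Phi :: "(fa set \<times> fa set \<Rightarrow> int) set \<Rightarrow> fa set" where
  "Phi X = cl (Suc n) (lin h1 (rep X))"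

lemma lin_h1_Fr: "x \<in> tz_free DD XX \<Longrightarrow> lin h1 x \<in> Fr (Suc n)"
  by (intro lin_Fr) (auto simp: h1_def zsupp_def tz_free_def intro!: FS_mult R_Fr R_Fr')

lemma Phi_cls: assumes "x \<in> tz_free DD XX" shows "Phi (tz_cls DD AA XX x) = cl (Suc n) (lin h1 x)"
proof -
  have "lin h1 x - lin h1 (rep (tz_cls DD AA XX x)) \<in> Idl (Suc n)"
    by (rule lin_rep_gen[OF h1_gens assms])
  then show ?thesis unfolding Phi_def by (intro cl_eqI) (rule Id_sym)
qed

lemma Phi_delta: "a \<in> Acar (Suc n) \<Longrightarrow> Phi (tz_cls DD AA XX (tz_delta (a, aone AA))) = a"
proof -
  assume a: "a \<in> Acar (Suc n)"
  have f: "tz_delta (a, aone AA) \<in> tz_free DD XX" using a H1 by (intro free_delta) auto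
  have "Phi (tz_cls DD AA XX (tz_delta (a, aone AA))) = cl (Suc n) (R a * R (aone AA))"
    using Phi_cls[OF f] by (simp add: lin_delta h1_def)
  also have "\<dots> = cl (Suc n) (R a)"
  proof (rule cl_eqI)
    have "R a * (R (aone AA) - 1) \<in> Idl (Suc n)" using H1 R_Fr[OF a] by blast
    then show "R a * R (aone AA) - R a \<in> Idl (Suc n)" by (simp add: algebra_simps)
  qed
  also have "\<dots> = a" using cl_R[OF a] .
  finally show ?thesis .
qed

lemma span1: assumes x: "x \<in> tz_free DD XX"
  shows "\<exists>a. a \<in> Acar (Suc n) \<and> zeq DD AA XX x (tz_delta (a, aone AA))"
proof -
  have "\<exists>b. (\<forall>j\<in>{1::nat}. b j \<in> mcarrier DD) \<and> zeq DD AA XX x (\<lambda>q. \<Sum>j\<in>{1::nat}. tz_delta (b j, (\<lambda>_. aone AA) j) q)"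
  proof (rule spanning[where z="azero AA" and ng="\<lambda>a. cl (Suc n) (- R a)"])
    show "azero AA \<in> mcarrier DD" using H0 by simp
    show "madd DD (azero AA) (azero AA) = azero AA" by (simp add: azero_cl aadd_cl)
    fix m assume m: "m \<in> mcarrier DD"
    have f: "- R m \<in> Fr (Suc n)" using R_Fr m by auto
    have e1: "cl (Suc n) (R m) = m" using cl_R m by simp
    have "aadd AA (cl (Suc n) (R m)) (cl (Suc n) (- R m)) = cl (Suc n) (R m + - R m)"
      by (rule aadd_cl[OF R_Fr f]) (use m in simp)
    then have "aadd AA m (cl (Suc n) (- R m)) = azero AA" using e1 by (simp add: azero_cl)
    then show "cl (Suc n) (- R m) \<in> mcarrier DD \<and> madd DD m (cl (Suc n) (- R m)) = azero AA"
      using cl_in[OF f] by simp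
  next
    fix m m' assume "m \<in> mcarrier DD" "m' \<in> mcarrier DD"
    then show "madd DD m m' \<in> mcarrier DD" using HA by simp
  next
    fix j :: nat assume "j \<in> {1}" then show "aone AA \<in> mcarrier XX" using H1 by simp
  next
    fix b c assume bc: "b \<in> mcarrier DD" "c \<in> mcarrier XX"
    have "zeq DD AA XX (tz_delta (ract DD b c, aone AA)) (tz_delta (b, lact XX c (aone AA)))"
      using bc H1 by (intro zeq_gen3) auto
    moreover have "lact XX c (aone AA) = c" using amul_one bc by simp
    ultimately have "zeq DD AA XX (tz_delta (b, c)) (tz_delta (amul AA b c, aone AA))"
      using zeq_sym by fastforce
    moreover have "amul AA b c \<in> mcarrier DD" using HM bc by simp
    ultimately show "\<exists>b'. (\<forall>j\<in>{1::nat}. b' j \<in> mcarrier DD) \<and> zeq DD AA XX (tz_delta (b, c)) (\<lambda>q. \<Sum>j\<in>{1::nat}. tz_delta (b' j, (\<lambda>_. aone AA) j) q)"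
      by (intro exI[of _ "\<lambda>_. amul AA b c"]) simp
  qed (use x in auto)
  then show ?thesis by auto
qed

lemma Phi_iso: "bimod_iso (nilcox n) (nilcox n) (tensor DD AA XX) M1"
  unfolding bimod_iso_def
proof (intro exI[of _ Phi] conjI ballI)
  have surj: "Phi ` mcarrier (tensor DD AA XX) = mcarrier M1"
  proof
    show "Phi ` mcarrier (tensor DD AA XX) \<subseteq> mcarrier M1"
    proof
      fix y assume "y \<in> Phi ` mcarrier (tensor DD AA XX)"
      then obtain X where X: "X \<in> mcarrier (tensor DD AA XX)" "y = Phi X" by blast
      have "rep X \<in> tz_free DD XX" using carrier_tensor_E[OF X(1)] by blast
      then show "y \<in> mcarrier M1" using X(2) lin_h1_Fr cl_in by (simp add: Phi_def)
    qed
    show "mcarrier M1 \<subseteq> Phi ` mcarrier (tensor DD AA XX)"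
    proof
      fix a assume a: "a \<in> mcarrier M1"
      have f: "tz_delta (a, aone AA) \<in> tz_free DD XX" using a H1 by (intro free_delta) auto
      show "a \<in> Phi ` mcarrier (tensor DD AA XX)"
        using Phi_delta[of a] a f by (intro image_eqI[of _ _ "tz_cls DD AA XX (tz_delta (a, aone AA))"]) auto
    qed
  qed
  have inj: "inj_on Phi (mcarrier (tensor DD AA XX))"
  proof (rule inj_onI)
    fix X Y assume X: "X \<in> mcarrier (tensor DD AA XX)" and Y: "Y \<in> mcarrier (tensor DD AA XX)" and e: "Phi X = Phi Y"
    obtain a where a: "a \<in> Acar (Suc n)" "zeq DD AA XX (rep X) (tz_delta (a, aone AA))"
      using span1 carrier_tensor_E[OF X] by blast
    obtain b where b: "b \<in> Acar (Suc n)" "zeq DD AA XX (rep Y) (tz_delta (b, aone AA))"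
      using span1 carrier_tensor_E[OF Y] by blast
    have X': "X = tz_cls DD AA XX (tz_delta (a, aone AA))" using zeq_cls[OF a(2)] carrier_tensor_E[OF X] by simp
    have Y': "Y = tz_cls DD AA XX (tz_delta (b, aone AA))" using zeq_cls[OF b(2)] carrier_tensor_E[OF Y] by simp
    have "a = b" using e Phi_delta a b X' Y' by simp
    then show "X = Y" using X' Y' by simp
  qed
  show "bij_betw Phi (mcarrier (tensor DD AA XX)) (mcarrier M1)"
    unfolding bij_betw_def using inj surj by blast
next
  fix X Y assume X: "X \<in> mcarrier (tensor DD AA XX)" and Y: "Y \<in> mcarrier (tensor DD AA XX)"
  have fx: "rep X \<in> tz_free DD XX" and fy: "rep Y \<in> tz_free DD XX"
    using carrier_tensor_E X Y by blast+
  have fxy: "(\<lambda>q. rep X q + rep Y q) \<in> tz_free DD XX" using free_add[OF fx fy] .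
  have "Phi (madd (tensor DD AA XX) X Y) = cl (Suc n) (lin h1 (rep X) + lin h1 (rep Y))"
    using Phi_cls[OF fxy] fin_free[OF fx] fin_free[OF fy] by (simp add: lin_add)
  also have "\<dots> = aadd AA (Phi X) (Phi Y)"
    unfolding Phi_def using lin_h1_Fr[OF fx] lin_h1_Fr[OF fy] by (simp add: aadd_cl)
  finally show "Phi (madd (tensor DD AA XX) X Y) = madd M1 (Phi X) (Phi Y)" by simp
next
  fix r X assume r: "r \<in> acarrier (nilcox n)" and X: "X \<in> mcarrier (tensor DD AA XX)"
  have fx: "rep X \<in> tz_free DD XX" using carrier_tensor_E X by blast
  have cr: "nc_chi n r \<in> Acar (Suc n)" and cr': "R (nc_chi n r) - R r \<in> Idl (Suc n)" using HC[OF r] by auto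
  let ?f = "\<lambda>(m, k). (lact DD r m, k)"
  have ff: "tz_map ?f (rep X) \<in> tz_free DD XX"
    by (rule free_map[OF fx]) (use cr HM in auto)
  have "Phi (lact (tensor DD AA XX) r X) = cl (Suc n) (lin (\<lambda>p. h1 (?f p)) (rep X))"
    using Phi_cls[OF ff] lin_map[OF fin_free[OF fx]] by simp
  also have "\<dots> = cl (Suc n) (lin (\<lambda>p. R (nc_chi n r) * h1 p) (rep X))"
  proof (rule cl_eqI, rule lin_cong)
    fix p assume "p \<in> zsupp (rep X)"
    then have p: "fst p \<in> Acar (Suc n)" "snd p \<in> Acar (Suc n)" using zsupp_car[OF fx] by auto
    have "(R (amul AA (nc_chi n r) (fst p)) - R (nc_chi n r) * R (fst p)) * R (snd p) \<in> Idl (Suc n)"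
      using HM[OF cr p(1)] R_Fr[OF p(2)] by blast
    then show "h1 (?f p) - R (nc_chi n r) * h1 p \<in> Idl (Suc n)"
      by (cases p) (simp add: h1_def algebra_simps)
  qed
  also have "\<dots> = amul AA (nc_chi n r) (Phi X)"
  proof -
    have "amul AA (nc_chi n r) (Phi X) = cl (Suc n) (R (nc_chi n r) * lin h1 (rep X))"
      unfolding Phi_def using amul_cl[OF R_Fr[OF cr] lin_h1_Fr[OF fx]] cl_R[OF cr] by simp
    then show ?thesis by (simp add: lin_lmul)
  qed
  finally show "Phi (lact (tensor DD AA XX) r X) = lact M1 r (Phi X)" by simp
next
  fix s X assume s: "s \<in> acarrier (nilcox n)" and X: "X \<in> mcarrier (tensor DD AA XX)"
  have fx: "rep X \<in> tz_free DD XX" using carrier_tensor_E X by blast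
  have cs: "nc_chi n s \<in> Acar (Suc n)" using HC[OF s] by auto
  let ?f = "\<lambda>(m, k). (m, ract XX k s)"
  have ff: "tz_map ?f (rep X) \<in> tz_free DD XX"
    by (rule free_map[OF fx]) (use cs HM in auto)
  have "Phi (ract (tensor DD AA XX) X s) = cl (Suc n) (lin (\<lambda>p. h1 (?f p)) (rep X))"
    using Phi_cls[OF ff] lin_map[OF fin_free[OF fx]] by simp
  also have "\<dots> = cl (Suc n) (lin (\<lambda>p. h1 p * R (nc_chi n s)) (rep X))"
  proof (rule cl_eqI, rule lin_cong)
    fix p assume "p \<in> zsupp (rep X)"
    then have p: "fst p \<in> Acar (Suc n)" "snd p \<in> Acar (Suc n)" using zsupp_car[OF fx] by auto
    have "R (fst p) * (R (amul AA (snd p) (nc_chi n s)) - R (snd p) * R (nc_chi n s)) \<in> Idl (Suc n)"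
      using HM[OF p(2) cs] R_Fr[OF p(1)] by blast
    then show "h1 (?f p) - h1 p * R (nc_chi n s) \<in> Idl (Suc n)"
      by (cases p) (simp add: h1_def algebra_simps)
  qed
  also have "\<dots> = amul AA (Phi X) (nc_chi n s)"
  proof -
    have "amul AA (Phi X) (nc_chi n s) = cl (Suc n) (lin h1 (rep X) * R (nc_chi n s))"
      unfolding Phi_def using amul_cl[OF lin_h1_Fr[OF fx] R_Fr[OF cs]] cl_R[OF cs] by simp
    then show ?thesis by (simp add: lin_rmul)
  qed
  finally show "Phi (ract (tensor DD AA XX) X s) = ract M1 (Phi X) s" by simp
qed

end



lemma comm_Fr: "x \<in> Fr m \<Longrightarrow> x * M [Suc m] - M [Suc m] * x \<in> Idl (Suc (Suc m))"
proof (induction x rule: FS_induct)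
  case zero then show ?case by simp
next
  case (step y c w)
  have "M (w @ [Suc m]) - M (Suc m # w) \<in> Idl (Suc (Suc m))"
    by (rule comm_Id) (use step in auto)
  then have "qc c * (M w * M [Suc m] - M [Suc m] * M w) \<in> Idl (Suc (Suc m))"
    by (simp add: M_append[symmetric] Id_qc)
  moreover have "(y + qc c * M w) * M [Suc m] - M [Suc m] * (y + qc c * M w)
      = (y * M [Suc m] - M [Suc m] * y) + qc c * (M w * M [Suc m] - M [Suc m] * M w)"
  proof -
    have e: "M [Suc m] * (qc c * M w) = qc c * (M [Suc m] * M w)" by (metis mult.assoc qc_comm)
    show ?thesis by (simp add: algebra_simps e)
  qed
  ultimately show ?case using step by (simp add: Id_add)
qed

lemma lin_sum_delta: "finite J \<Longrightarrow> lin h (\<lambda>q. \<Sum>j\<in>J. tz_delta (p j) q) = (\<Sum>j\<in>J. h (p j))"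
proof (induction J rule: finite_induct)
  case empty then show ?case by (simp add: lin_zero)
next
  case (insert a F)
  have fs: "finite (zsupp (\<lambda>q. \<Sum>j\<in>F. tz_delta (p j) q))"
  proof -
    have "zsupp (\<lambda>q. \<Sum>j\<in>F. tz_delta (p j) q) \<subseteq> p ` F"
    proof
      fix q assume "q \<in> zsupp (\<lambda>q. \<Sum>j\<in>F. tz_delta (p j) q)"
      then have "(\<Sum>j\<in>F. tz_delta (p j) q) \<noteq> 0" by (simp add: zsupp_def)
      then obtain j where "j \<in> F" "tz_delta (p j) q \<noteq> 0" by (meson sum.neutral)
      then show "q \<in> p ` F" by (auto simp: tz_delta_def split: if_splits)
    qed
    then show ?thesis using insert by (auto intro: finite_subset)
  qed
  have "lin h (\<lambda>q. \<Sum>j\<in>insert a F. tz_delta (p j) q) = lin h (\<lambda>q. tz_delta (p a) q + (\<Sum>j\<in>F. tz_delta (p j) q))"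
    using insert by simp
  also have "\<dots> = h (p a) + lin h (\<lambda>q. \<Sum>j\<in>F. tz_delta (p j) q)"
    using lin_add[OF fin_delta fs] by (simp add: lin_delta)
  finally show ?case using insert by simp
qed

lemma free_sum_delta: "finite J \<Longrightarrow> (\<And>j. j \<in> J \<Longrightarrow> p j \<in> mcarrier MM \<times> mcarrier NN)
   \<Longrightarrow> (\<lambda>q. \<Sum>j\<in>J. tz_delta (p j) q) \<in> tz_free MM NN"
proof (induction J rule: finite_induct)
  case empty then show ?case using free_zero by simp
next
  case (insert a F)
  have "(\<lambda>q. tz_delta (p a) q + (\<Sum>j\<in>F. tz_delta (p j) q)) \<in> tz_free MM NN"
    by (rule free_add[OF free_delta]) (use insert in auto)
  then show ?case using insert by simp
qed

context fixes m :: nat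
begin

abbreviation "X2 \<equiv> Xmod m"
abbreviation "D2 \<equiv> Dmod (Suc m)"
abbreviation "S2 \<equiv> nilcox m"
abbreviation "An \<equiv> nilcox (Suc m)"
abbreviation "An1 \<equiv> nilcox (Suc (Suc m))"
abbreviation "T2 \<equiv> tensor X2 S2 D2"
abbreviation "RHS2 \<equiv> dsum (regbimod An id id) T2"
abbreviation "M12 \<equiv> regbimod An1 (nc_chi (Suc m)) (nc_chi (Suc m))"

lemma X2_simps[simp]: "mcarrier X2 = Acar (Suc m)" "lact X2 r a = amul An r a" "ract X2 a s = amul An a (nc_chi m s)"
  "madd X2 = aadd An"
  by (simp_all add: Xmod_def)
lemma D2_simps[simp]: "mcarrier D2 = Acar (Suc m)" "lact D2 r a = amul An (nc_chi m r) a" "ract D2 a s = amul An a s"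
  "madd D2 = aadd An"
  by (simp_all add: Dmod_Suc)

definition h2 :: "fa set \<times> fa set \<Rightarrow> fr" where "h2 p = R (fst p) * M [Suc m] * R (snd p)"

lemma Mn_Fr: "M [Suc m] \<in> Fr (Suc (Suc m))" by (intro FS_M) auto

lemma R_Fr1: "a \<in> Acar (Suc m) \<Longrightarrow> R a \<in> Fr (Suc (Suc m))"
  using R_Fr Fr_Suc by blast

lemma Id1: "x \<in> Idl (Suc m) \<Longrightarrow> x \<in> Idl (Suc (Suc m))" by (rule Id_Suc)

lemma h2_gens: "g \<in> tz_gens X2 S2 D2 \<Longrightarrow> lin h2 g \<in> Idl (Suc (Suc m))"
proof (rule lin_gens)
  fix b b' c assume a: "b \<in> mcarrier X2" "b' \<in> mcarrier X2" "c \<in> mcarrier D2"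
  have "(R (aadd An b b') - (R b + R b')) * M [Suc m] * R c \<in> Idl (Suc (Suc m))"
    using Id1[OF conjunct2[OF HA[of b "Suc m" b']]] a R_Fr1[of c] Mn_Fr by (intro Id_rmul) auto
  then show "h2 (madd X2 b b', c) - h2 (b, c) - h2 (b', c) \<in> Idl (Suc (Suc m))"
    by (simp add: h2_def algebra_simps)
next
  fix b c c' assume a: "b \<in> mcarrier X2" "c \<in> mcarrier D2" "c' \<in> mcarrier D2"
  have "(R b * M [Suc m]) * (R (aadd An c c') - (R c + R c')) \<in> Idl (Suc (Suc m))"
    using Id1[OF conjunct2[OF HA[of c "Suc m" c']]] a R_Fr1[of b] Mn_Fr by (intro Id_lmul FS_mult) auto
  then show "h2 (b, madd D2 c c') - h2 (b, c) - h2 (b, c') \<in> Idl (Suc (Suc m))"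
    by (simp add: h2_def algebra_simps)
next
  fix b s c assume a: "b \<in> mcarrier X2" "s \<in> acarrier S2" "c \<in> mcarrier D2"
  let ?cs = "nc_chi m s"
  let ?Mn = "M [Suc m]"
  have cs: "?cs \<in> Acar (Suc m)" "R ?cs - R s \<in> Idl (Suc m)" using HC[OF a(2)] by auto
  have Rb: "R b \<in> Fr (Suc (Suc m))" and Rc: "R c \<in> Fr (Suc (Suc m))" using a R_Fr1 by auto
  have Rs: "R s \<in> Fr m" using R_Fr a(2) by blast
  have Rs2: "R s \<in> Fr (Suc (Suc m))" using Fr_Suc[OF Fr_Suc[OF Rs]] .
  have Rcs: "R ?cs \<in> Fr (Suc (Suc m))" using R_Fr1 cs(1) by blast
  have t1: "(R (amul An b ?cs) - R b * R ?cs) * ?Mn * R c \<in> Idl (Suc (Suc m))"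
    using Id1[OF conjunct2[OF HM[OF _ cs(1)]]] a(1) Rc Mn_Fr by (intro Id_rmul) auto
  have t2: "R b * (R ?cs - R s) * ?Mn * R c \<in> Idl (Suc (Suc m))"
    using Id1[OF cs(2)] Rb Rc Mn_Fr by (intro Id_rmul Id_lmul) auto
  have t3: "R b * (R s * ?Mn - ?Mn * R s) * R c \<in> Idl (Suc (Suc m))"
    using comm_Fr[OF Rs] Rb Rc by (intro Id_rmul Id_lmul) auto
  have t4: "R b * ?Mn * (R s - R ?cs) * R c \<in> Idl (Suc (Suc m))"
    using Id1[OF Id_sym[OF cs(2)]] Rb Rc Mn_Fr by (intro Id_rmul Id_lmul FS_mult) auto
  have t5: "R b * ?Mn * (R ?cs * R c - R (amul An ?cs c)) \<in> Idl (Suc (Suc m))"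
    using Id1[OF Id_sym[OF conjunct2[OF HM[OF cs(1)]]]] a(3) Rb Mn_Fr by (intro Id_lmul FS_mult) auto
  have "(R (amul An b ?cs) - R b * R ?cs) * ?Mn * R c + R b * (R ?cs - R s) * ?Mn * R c
      + R b * (R s * ?Mn - ?Mn * R s) * R c + R b * ?Mn * (R s - R ?cs) * R c
      + R b * ?Mn * (R ?cs * R c - R (amul An ?cs c)) \<in> Idl (Suc (Suc m))"
    using t1 t2 t3 t4 t5 by (intro Id_add)
  then show "h2 (ract X2 b s, c) - h2 (b, lact D2 s c) \<in> Idl (Suc (Suc m))"
    by (simp add: h2_def algebra_simps)
qed

lemma lin_h2_Fr: assumes "x \<in> tz_free X2 D2" shows "lin h2 x \<in> Fr (Suc (Suc m))"
proof (rule lin_Fr)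
  fix p assume "p \<in> zsupp x"
  then have "fst p \<in> Acar (Suc m)" "snd p \<in> Acar (Suc m)" using zsupp_car[OF assms] by auto
  then show "h2 p \<in> Fr (Suc (Suc m))" unfolding h2_def by (intro FS_mult R_Fr1 Mn_Fr)
qed

lemma h2_cls: "x \<in> tz_free X2 D2 \<Longrightarrow> lin h2 (rep (tz_cls X2 S2 D2 x)) - lin h2 x \<in> Idl (Suc (Suc m))"
  using lin_rep_gen[OF h2_gens] Id_sym by blast

definition Psi :: "fa set \<times> (fa set \<times> fa set \<Rightarrow> int) set \<Rightarrow> fa set" where
  "Psi p = cl (Suc (Suc m)) (R (fst p) + lin h2 (rep (snd p)))"

definition e2 :: "nat \<Rightarrow> fa set" where "e2 j = cl (Suc m) (M (wd j m))"

lemma e2_car: "1 \<le> j \<Longrightarrow> e2 j \<in> Acar (Suc m)"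
  unfolding e2_def by (intro cl_in M_wd_Fr)

lemma h2_e: assumes b: "b \<in> Acar (Suc m)" and j: "1 \<le> j" "j \<le> Suc m"
  shows "h2 (b, e2 j) - R b * M (wd j (Suc m)) \<in> Idl (Suc (Suc m))"
proof -
  have "R (e2 j) - M (wd j m) \<in> Idl (Suc m)" unfolding e2_def by (rule R_cl_Id[OF M_wd_Fr[OF j(1)]])
  then have "(R b * M [Suc m]) * (R (e2 j) - M (wd j m)) \<in> Idl (Suc (Suc m))"
    using R_Fr1[OF b] Mn_Fr by (intro Id_lmul FS_mult Id1)
  moreover have "M (wd j (Suc m)) = M [Suc m] * M (wd j m)"
    using wd_Suc[OF j(2)] by (simp add: M_append[symmetric])
  ultimately show ?thesis by (simp add: h2_def algebra_simps)
qed

lemma Psi_cls: "x \<in> tz_free X2 D2 \<Longrightarrow> Psi (a, tz_cls X2 S2 D2 x) = cl (Suc (Suc m)) (R a + lin h2 x)"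
  unfolding Psi_def using h2_cls[of x] by (intro cl_eqI) simp

lemma Psi_sum:
  assumes a: "a \<in> Acar (Suc m)" and b: "\<forall>j\<in>{1..Suc m}. b j \<in> Acar (Suc m)"
  shows "Psi (a, tz_cls X2 S2 D2 (\<lambda>q. \<Sum>j\<in>{1..Suc m}. tz_delta (b j, e2 j) q))
       = cl (Suc (Suc m)) (\<Sum>j\<in>{1..Suc (Suc m)}. (if j = Suc (Suc m) then R a else R (b j)) * M (wd j (Suc m)))"
proof -
  have fz: "(\<lambda>q. \<Sum>j\<in>{1..Suc m}. tz_delta (b j, e2 j) q) \<in> tz_free X2 D2"
    by (rule free_sum_delta) (use b e2_car in auto)
  have "Psi (a, tz_cls X2 S2 D2 (\<lambda>q. \<Sum>j\<in>{1..Suc m}. tz_delta (b j, e2 j) q))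
      = cl (Suc (Suc m)) (R a + (\<Sum>j\<in>{1..Suc m}. h2 (b j, e2 j)))"
    using Psi_cls[OF fz] lin_sum_delta[of "{1..Suc m}" h2 "\<lambda>j. (b j, e2 j)"] by simp
  also have "\<dots> = cl (Suc (Suc m)) (R a + (\<Sum>j\<in>{1..Suc m}. R (b j) * M (wd j (Suc m))))"
  proof (rule cl_eqI)
    have "(\<Sum>j\<in>{1..Suc m}. h2 (b j, e2 j) - R (b j) * M (wd j (Suc m))) \<in> Idl (Suc (Suc m))"
      using b h2_e by (intro Id_sum) auto
    then show "R a + (\<Sum>j\<in>{1..Suc m}. h2 (b j, e2 j)) - (R a + (\<Sum>j\<in>{1..Suc m}. R (b j) * M (wd j (Suc m)))) \<in> Idl (Suc (Suc m))"
      by (simp add: sum_subtractf del: sum.cl_ivl_Suc)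
  qed
  also have "(R a + (\<Sum>j\<in>{1..Suc m}. R (b j) * M (wd j (Suc m))))
      = (\<Sum>j\<in>{1..Suc (Suc m)}. (if j = Suc (Suc m) then R a else R (b j)) * M (wd j (Suc m)))"
  proof -
    have "(\<Sum>j\<in>{1..Suc m}. (if j = Suc (Suc m) then R a else R (b j)) * M (wd j (Suc m)))
        = (\<Sum>j\<in>{1..Suc m}. R (b j) * M (wd j (Suc m)))"
      by (rule sum.cong) auto
    moreover have "{1..Suc (Suc m)} = insert (Suc (Suc m)) {1..Suc m}" by auto
    ultimately show ?thesis by (simp add: wd_self M_Nil add.commute del: sum.cl_ivl_Suc)
  qed
  finally show ?thesis .
qed

lemma zeq_zero2: assumes "b \<in> mcarrier MM" "z \<in> mcarrier NN" "madd NN z z = z"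
  shows "zeq MM S NN (tz_delta (b, z)) (\<lambda>q. 0)"
proof -
  have "zeq MM S NN (tz_delta (b, z)) (\<lambda>q. tz_delta (b, z) q + tz_delta (b, z) q)"
    using zeq_gen2[OF assms(1) assms(2) assms(2), of S] assms(3) by simp
  then have "(\<lambda>q. tz_delta (b, z) q - (tz_delta (b, z) q + tz_delta (b, z) q)) \<in> tz_rel MM S NN"
    unfolding zeq_def .
  from rel_neg[OF this] show ?thesis unfolding zeq_def by simp
qed

lemma add2: assumes b: "b \<in> Acar (Suc m)" and J: "finite J" and y: "\<forall>j\<in>J. y j \<in> Fr (Suc m)"
  shows "zeq X2 S2 D2 (tz_delta (b, cl (Suc m) (\<Sum>j\<in>J. y j))) (\<lambda>q. \<Sum>j\<in>J. tz_delta (b, cl (Suc m) (y j)) q)"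
  using J y
proof (induction J rule: finite_induct)
  case empty
  show ?case using zeq_zero2[of b X2 "cl (Suc m) 0" D2 S2] b cl_in[of 0 "Suc m"] by (simp add: aadd_cl)
next
  case (insert a F)
  have ya: "y a \<in> Fr (Suc m)" and yF: "(\<Sum>j\<in>F. y j) \<in> Fr (Suc m)" using insert by auto
  have e: "cl (Suc m) (\<Sum>j\<in>insert a F. y j) = aadd An (cl (Suc m) (y a)) (cl (Suc m) (\<Sum>j\<in>F. y j))"
    using insert aadd_cl[OF ya yF] by simp
  have "zeq X2 S2 D2 (tz_delta (b, cl (Suc m) (\<Sum>j\<in>insert a F. y j)))
      (\<lambda>q. tz_delta (b, cl (Suc m) (y a)) q + tz_delta (b, cl (Suc m) (\<Sum>j\<in>F. y j)) q)"
    unfolding e using zeq_gen2[of b X2 "cl (Suc m) (y a)" D2 "cl (Suc m) (\<Sum>j\<in>F. y j)" S2] b cl_in[OF ya] cl_in[OF yF]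
    by simp
  moreover have "zeq X2 S2 D2 (\<lambda>q. tz_delta (b, cl (Suc m) (y a)) q + tz_delta (b, cl (Suc m) (\<Sum>j\<in>F. y j)) q)
      (\<lambda>q. tz_delta (b, cl (Suc m) (y a)) q + (\<Sum>j\<in>F. tz_delta (b, cl (Suc m) (y j)) q))"
    using insert by (intro zeq_add zeq_refl) auto
  ultimately show ?case using insert zeq_trans by (simp add: zeq_trans)
qed

lemma span2: assumes x: "x \<in> tz_free X2 D2"
  shows "\<exists>b. (\<forall>j\<in>{1..Suc m}. b j \<in> mcarrier X2) \<and> zeq X2 S2 D2 x (\<lambda>q. \<Sum>j\<in>{1..Suc m}. tz_delta (b j, e2 j) q)"
proof (rule spanning[where z="azero An" and ng="\<lambda>a. cl (Suc m) (- R a)"])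
  show "azero An \<in> mcarrier X2" using H0 by simp
  show "madd X2 (azero An) (azero An) = azero An" by (simp add: azero_cl aadd_cl)
  fix a assume a: "a \<in> mcarrier X2"
  have f: "- R a \<in> Fr (Suc m)" using R_Fr a by auto
  have e1: "cl (Suc m) (R a) = a" using cl_R a by simp
  have "aadd An (cl (Suc m) (R a)) (cl (Suc m) (- R a)) = cl (Suc m) (R a + - R a)"
    by (rule aadd_cl[OF R_Fr f]) (use a in simp)
  then have "aadd An a (cl (Suc m) (- R a)) = azero An" using e1 by (simp add: azero_cl)
  then show "cl (Suc m) (- R a) \<in> mcarrier X2 \<and> madd X2 a (cl (Suc m) (- R a)) = azero An"
    using cl_in[OF f] by simp
next
  fix a a' assume "a \<in> mcarrier X2" "a' \<in> mcarrier X2"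
  then show "madd X2 a a' \<in> mcarrier X2" using HA by simp
next
  fix j :: nat assume "j \<in> {1..Suc m}" then show "e2 j \<in> mcarrier D2" using e2_car by simp
next
  fix b c assume bc: "b \<in> mcarrier X2" "c \<in> mcarrier D2"
  have Rc: "R c \<in> Fr (Suc m)" using R_Fr bc by simp
  obtain g where g: "\<forall>j. g j \<in> Fr m" "R c - (\<Sum>j\<in>{1..Suc m}. g j * M (wd j m)) \<in> Idl (Suc m)"
    using K1[OF Rc] unfolding spanned_def by blast
  have gM: "\<forall>j\<in>{1..Suc m}. g j * M (wd j m) \<in> Fr (Suc m)"
  proof
    fix j assume j: "j \<in> {1..Suc m}"
    have "g j \<in> Fr (Suc m)" using Fr_Suc g by blast
    then show "g j * M (wd j m) \<in> Fr (Suc m)" using FS_mult M_wd_Fr[of j m] j by simp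
  qed
  have c: "c = cl (Suc m) (\<Sum>j\<in>{1..Suc m}. g j * M (wd j m))"
    using cl_R[of c "Suc m"] bc cl_eq[OF g(2)] by simp
  have s1: "zeq X2 S2 D2 (tz_delta (b, c)) (\<lambda>q. \<Sum>j\<in>{1..Suc m}. tz_delta (b, cl (Suc m) (g j * M (wd j m))) q)"
    unfolding c using add2[of b "{1..Suc m}" "\<lambda>j. g j * M (wd j m)"] bc gM by simp
  have s2: "zeq X2 S2 D2 (\<lambda>q. \<Sum>j\<in>{1..Suc m}. tz_delta (b, cl (Suc m) (g j * M (wd j m))) q)
      (\<lambda>q. \<Sum>j\<in>{1..Suc m}. tz_delta (amul An b (nc_chi m (cl m (g j))), e2 j) q)"
  proof (rule zeq_sum)
    fix j assume j: "j \<in> {1..Suc m}"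
    have sj: "cl m (g j) \<in> acarrier S2" using cl_in g by blast
    have "lact D2 (cl m (g j)) (e2 j) = cl (Suc m) (g j * M (wd j m))"
      using chi_cl[of "g j" m] g amul_cl[OF Fr_Suc M_wd_Fr] j by (simp add: e2_def)
    moreover have "zeq X2 S2 D2 (tz_delta (ract X2 b (cl m (g j)), e2 j)) (tz_delta (b, lact D2 (cl m (g j)) (e2 j)))"
      by (rule zeq_gen3) (use bc sj e2_car j in auto)
    ultimately show "zeq X2 S2 D2 (tz_delta (b, cl (Suc m) (g j * M (wd j m)))) (tz_delta (amul An b (nc_chi m (cl m (g j))), e2 j))"
      using zeq_sym by fastforce
  qed
  have car: "\<forall>j\<in>{1..Suc m}. amul An b (nc_chi m (cl m (g j))) \<in> mcarrier X2"
    using HM HC cl_in g bc by simp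
  show "\<exists>b'. (\<forall>j\<in>{1..Suc m}. b' j \<in> mcarrier X2) \<and> zeq X2 S2 D2 (tz_delta (b, c)) (\<lambda>q. \<Sum>j\<in>{1..Suc m}. tz_delta (b' j, e2 j) q)"
    by (rule exI[of _ "\<lambda>j. amul An b (nc_chi m (cl m (g j)))"]) (use car zeq_trans[OF s1 s2] in simp)
qed (use x in auto)

lemma sumGM: assumes "\<forall>j\<in>{1..Suc (Suc m)}. G j \<in> Fr (Suc m)"
  shows "(\<Sum>j\<in>{1..Suc (Suc m)}. G j * M (wd j (Suc m))) \<in> Fr (Suc (Suc m))"
proof (rule FS_sum)
  fix j assume j: "j \<in> {1..Suc (Suc m)}"
  have "G j \<in> Fr (Suc (Suc m))" using Fr_Suc assms j by blast
  then show "G j * M (wd j (Suc m)) \<in> Fr (Suc (Suc m))" using FS_mult M_wd_Fr[of j "Suc m"] j by simp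
qed

lemma Psi_car: assumes "a \<in> Acar (Suc m)" "X \<in> mcarrier T2"
  shows "Psi (a, X) \<in> Acar (Suc (Suc m))"
proof -
  have "rep X \<in> tz_free X2 D2" using carrier_tensor_E[OF assms(2)] by blast
  then show ?thesis unfolding Psi_def using R_Fr1[OF assms(1)] lin_h2_Fr by (simp add: cl_in FS_add)
qed

lemma Psi_cl: "Psi (a, X) = cl (Suc (Suc m)) (R a + lin h2 (rep X))" by (simp add: Psi_def)

lemma Psi_inj: "inj_on Psi (mcarrier RHS2)"
proof (rule inj_onI)
  fix p p' assume p: "p \<in> mcarrier RHS2" and p': "p' \<in> mcarrier RHS2" and e: "Psi p = Psi p'"
  obtain a X where aX: "p = (a, X)" by (cases p)
  obtain a' X' where aX': "p' = (a', X')" by (cases p')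
  have a: "a \<in> Acar (Suc m)" "X \<in> mcarrier T2" using p aX by auto
  have a': "a' \<in> Acar (Suc m)" "X' \<in> mcarrier T2" using p' aX' by auto
  obtain b where b: "\<forall>j\<in>{1..Suc m}. b j \<in> Acar (Suc m)" "zeq X2 S2 D2 (rep X) (\<lambda>q. \<Sum>j\<in>{1..Suc m}. tz_delta (b j, e2 j) q)"
    using span2 carrier_tensor_E[OF a(2)] by fastforce
  obtain b' where b': "\<forall>j\<in>{1..Suc m}. b' j \<in> Acar (Suc m)" "zeq X2 S2 D2 (rep X') (\<lambda>q. \<Sum>j\<in>{1..Suc m}. tz_delta (b' j, e2 j) q)"
    using span2 carrier_tensor_E[OF a'(2)] by fastforce
  have X: "X = tz_cls X2 S2 D2 (\<lambda>q. \<Sum>j\<in>{1..Suc m}. tz_delta (b j, e2 j) q)"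
    using zeq_cls[OF b(2)] carrier_tensor_E[OF a(2)] by simp
  have X': "X' = tz_cls X2 S2 D2 (\<lambda>q. \<Sum>j\<in>{1..Suc m}. tz_delta (b' j, e2 j) q)"
    using zeq_cls[OF b'(2)] carrier_tensor_E[OF a'(2)] by simp
  define G where "G j = (if j = Suc (Suc m) then R a else R (b j))" for j
  define G' where "G' j = (if j = Suc (Suc m) then R a' else R (b' j))" for j
  have GF: "\<forall>j\<in>{1..Suc (Suc m)}. G j \<in> Fr (Suc m)" using a b R_Fr unfolding G_def by auto
  have GF': "\<forall>j\<in>{1..Suc (Suc m)}. G' j \<in> Fr (Suc m)" using a' b' R_Fr unfolding G'_def by auto
  have S: "(\<Sum>j\<in>{1..Suc (Suc m)}. G j * M (wd j (Suc m))) \<in> Fr (Suc (Suc m))"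
    by (rule sumGM[OF GF])
  have S': "(\<Sum>j\<in>{1..Suc (Suc m)}. G' j * M (wd j (Suc m))) \<in> Fr (Suc (Suc m))"
    by (rule sumGM[OF GF'])
  have "cl (Suc (Suc m)) (\<Sum>j\<in>{1..Suc (Suc m)}. G j * M (wd j (Suc m))) = cl (Suc (Suc m)) (\<Sum>j\<in>{1..Suc (Suc m)}. G' j * M (wd j (Suc m)))"
    using e Psi_sum[OF a(1) b(1)] Psi_sum[OF a'(1) b'(1)] aX aX' X X' unfolding G_def G'_def by simp
  then have "(\<Sum>j\<in>{1..Suc (Suc m)}. G j * M (wd j (Suc m))) - (\<Sum>j\<in>{1..Suc (Suc m)}. G' j * M (wd j (Suc m))) \<in> Idl (Suc (Suc m))"
    using cl_eq_iff[OF S'] by blast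
  then have I: "(\<Sum>j\<in>{1..Suc (Suc m)}. (G j - G' j) * M (wd j (Suc m))) \<in> Idl (Suc (Suc m))"
    by (simp add: left_diff_distrib sum_subtractf del: sum.cl_ivl_Suc)
  have GG: "G j - G' j \<in> Idl (Suc m)" if "j \<in> {1..Suc (Suc m)}" for j
    by (rule K2[OF _ I that]) (use GF GF' in auto)
  have "R a - R a' \<in> Idl (Suc m)" using GG[of "Suc (Suc m)"] unfolding G_def G'_def by simp
  then have aa: "a = a'" using R_eq a(1) a'(1) by blast
  have bb: "b j = b' j" if "j \<in> {1..Suc m}" for j
  proof -
    have "R (b j) - R (b' j) \<in> Idl (Suc m)" using GG[of j] that unfolding G_def G'_def by simp
    then show ?thesis using R_eq b b' that by blast
  qed
  have "(\<lambda>q. \<Sum>j\<in>{1..Suc m}. tz_delta (b j, e2 j) q) = (\<lambda>q. \<Sum>j\<in>{1..Suc m}. tz_delta (b' j, e2 j) q)"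
    using bb by (intro ext sum.cong) auto
  then show "p = p'" using aX aX' X X' aa by simp
qed

lemma Psi_surj: "Psi ` mcarrier RHS2 = Acar (Suc (Suc m))"
proof
  show "Psi ` mcarrier RHS2 \<subseteq> Acar (Suc (Suc m))" using Psi_car by auto
  show "Acar (Suc (Suc m)) \<subseteq> Psi ` mcarrier RHS2"
  proof
    fix y assume y: "y \<in> Acar (Suc (Suc m))"
    have Ry: "R y \<in> Fr (Suc (Suc m))" using R_Fr y by blast
    obtain g where g: "\<forall>j. g j \<in> Fr (Suc m)" "R y - (\<Sum>j\<in>{1..Suc (Suc m)}. g j * M (wd j (Suc m))) \<in> Idl (Suc (Suc m))"
      using K1[OF Ry] unfolding spanned_def by blast
    define a where "a = cl (Suc m) (g (Suc (Suc m)))"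
    define b where "b j = cl (Suc m) (g j)" for j
    have a: "a \<in> Acar (Suc m)" unfolding a_def using g cl_in by blast
    have b: "\<forall>j\<in>{1..Suc m}. b j \<in> Acar (Suc m)" unfolding b_def using g cl_in by blast
    let ?X = "tz_cls X2 S2 D2 (\<lambda>q. \<Sum>j\<in>{1..Suc m}. tz_delta (b j, e2 j) q)"
    have fz: "(\<lambda>q. \<Sum>j\<in>{1..Suc m}. tz_delta (b j, e2 j) q) \<in> tz_free X2 D2"
      by (rule free_sum_delta) (use b e2_car in auto)
    have Xc: "?X \<in> mcarrier T2" using fz by simp
    have "Psi (a, ?X) = cl (Suc (Suc m)) (\<Sum>j\<in>{1..Suc (Suc m)}. (if j = Suc (Suc m) then R a else R (b j)) * M (wd j (Suc m)))"
      by (rule Psi_sum[OF a b])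
    also have "\<dots> = cl (Suc (Suc m)) (\<Sum>j\<in>{1..Suc (Suc m)}. g j * M (wd j (Suc m)))"
    proof (rule cl_eqI)
      have "(\<Sum>j\<in>{1..Suc (Suc m)}. ((if j = Suc (Suc m) then R a else R (b j)) - g j) * M (wd j (Suc m))) \<in> Idl (Suc (Suc m))"
      proof (intro Id_sum Id_rmul M_wd_Fr Id1)
        fix j assume "j \<in> {1..Suc (Suc m)}"
        show "(if j = Suc (Suc m) then R a else R (b j)) - g j \<in> Idl (Suc m)"
          unfolding a_def b_def using R_cl_Id g by auto
      qed auto
      then show "(\<Sum>j\<in>{1..Suc (Suc m)}. (if j = Suc (Suc m) then R a else R (b j)) * M (wd j (Suc m)))
          - (\<Sum>j\<in>{1..Suc (Suc m)}. g j * M (wd j (Suc m))) \<in> Idl (Suc (Suc m))"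
        by (simp add: left_diff_distrib sum_subtractf del: sum.cl_ivl_Suc)
    qed
    also have "\<dots> = cl (Suc (Suc m)) (R y)" using cl_eq[OF g(2)] by simp
    also have "\<dots> = y" using cl_R[OF y] .
    finally show "y \<in> Psi ` mcarrier RHS2" using a Xc by (intro image_eqI[of _ _ "(a, ?X)"]) auto
  qed
qed

lemma Psi_iso: "bimod_iso An An RHS2 M12"
  unfolding bimod_iso_def
proof (intro exI[of _ Psi] conjI ballI)
  show "bij_betw Psi (mcarrier RHS2) (mcarrier M12)"
    unfolding bij_betw_def using Psi_inj Psi_surj by simp
next
  fix p p' assume p: "p \<in> mcarrier RHS2" and p': "p' \<in> mcarrier RHS2"
  obtain a X where aX: "p = (a, X)" by (cases p)
  obtain a' X' where aX': "p' = (a', X')" by (cases p')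
  have a: "a \<in> Acar (Suc m)" "X \<in> mcarrier T2" using p aX by auto
  have a': "a' \<in> Acar (Suc m)" "X' \<in> mcarrier T2" using p' aX' by auto
  have fx: "rep X \<in> tz_free X2 D2" and fx': "rep X' \<in> tz_free X2 D2"
    using carrier_tensor_E a(2) a'(2) by blast+
  have fxy: "(\<lambda>q. rep X q + rep X' q) \<in> tz_free X2 D2" using free_add[OF fx fx'] .
  have "Psi (madd RHS2 p p') = cl (Suc (Suc m)) (R (aadd An a a') + lin h2 (\<lambda>q. rep X q + rep X' q))"
    using aX aX' Psi_cls[OF fxy] by simp
  also have "\<dots> = cl (Suc (Suc m)) ((R a + lin h2 (rep X)) + (R a' + lin h2 (rep X')))"
  proof (rule cl_eqI)
    have "R (aadd An a a') - (R a + R a') \<in> Idl (Suc (Suc m))" using HA[OF a(1) a'(1)] Id1 by blast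
    then show "R (aadd An a a') + lin h2 (\<lambda>q. rep X q + rep X' q) - (R a + lin h2 (rep X) + (R a' + lin h2 (rep X'))) \<in> Idl (Suc (Suc m))"
      using fin_free[OF fx] fin_free[OF fx'] by (simp add: lin_add algebra_simps)
  qed
  also have "\<dots> = aadd An1 (Psi p) (Psi p')"
    using aX aX' aadd_cl[OF FS_add[OF R_Fr1[OF a(1)] lin_h2_Fr[OF fx]] FS_add[OF R_Fr1[OF a'(1)] lin_h2_Fr[OF fx']]]
    by (simp add: Psi_cl)
  finally show "Psi (madd RHS2 p p') = madd M12 (Psi p) (Psi p')" by simp
next
  fix r p assume r: "r \<in> acarrier An" and p: "p \<in> mcarrier RHS2"
  obtain a X where aX: "p = (a, X)" by (cases p)
  have a: "a \<in> Acar (Suc m)" "X \<in> mcarrier T2" using p aX by auto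
  have fx: "rep X \<in> tz_free X2 D2" using carrier_tensor_E a(2) by blast
  have cr: "nc_chi (Suc m) r \<in> Acar (Suc (Suc m))" "R (nc_chi (Suc m) r) - R r \<in> Idl (Suc (Suc m))" using HC[OF r] by auto
  have Rr: "R r \<in> Fr (Suc (Suc m))" using R_Fr1 r by simp
  let ?f = "\<lambda>(b, c). (lact X2 r b, c)"
  have ff: "tz_map ?f (rep X) \<in> tz_free X2 D2"
    by (rule free_map[OF fx]) (use r HM in auto)
  have "Psi (lact RHS2 r p) = cl (Suc (Suc m)) (R (amul An r a) + lin (\<lambda>q. h2 (?f q)) (rep X))"
    using aX Psi_cls[OF ff] lin_map[OF fin_free[OF fx]] by simp
  also have "\<dots> = cl (Suc (Suc m)) (R (nc_chi (Suc m) r) * R a + lin (\<lambda>q. R (nc_chi (Suc m) r) * h2 q) (rep X))"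
  proof (rule cl_eqI)
    have 1: "R (amul An r a) - R (nc_chi (Suc m) r) * R a \<in> Idl (Suc (Suc m))"
    proof -
      have "(R (amul An r a) - R r * R a) - (R (nc_chi (Suc m) r) - R r) * R a \<in> Idl (Suc (Suc m))"
        by (rule Id_diff[OF Id1[OF conjunct2[OF HM[OF r a(1)]]] Id_rmul[OF R_Fr1[OF a(1)] cr(2)]])
      then show ?thesis by (simp add: algebra_simps)
    qed
    have 2: "lin (\<lambda>q. h2 (?f q)) (rep X) - lin (\<lambda>q. R (nc_chi (Suc m) r) * h2 q) (rep X) \<in> Idl (Suc (Suc m))"
    proof (rule lin_cong)
      fix q assume "q \<in> zsupp (rep X)"
      then have qc: "fst q \<in> Acar (Suc m)" "snd q \<in> Acar (Suc m)" using zsupp_car[OF fx] by auto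
      have "(R (amul An r (fst q)) - R r * R (fst q)) * M [Suc m] * R (snd q)
          - (R (nc_chi (Suc m) r) - R r) * (R (fst q) * M [Suc m] * R (snd q)) \<in> Idl (Suc (Suc m))"
        by (rule Id_diff[OF Id_rmul[OF R_Fr1[OF qc(2)] Id_rmul[OF Mn_Fr Id1[OF conjunct2[OF HM[OF r qc(1)]]]]]
              Id_rmul[OF FS_mult[OF FS_mult[OF R_Fr1[OF qc(1)] Mn_Fr] R_Fr1[OF qc(2)]] cr(2)]])
      then show "h2 (?f q) - R (nc_chi (Suc m) r) * h2 q \<in> Idl (Suc (Suc m))"
        by (cases q) (simp add: h2_def algebra_simps)
    qed
    show "R (amul An r a) + lin (\<lambda>q. h2 (?f q)) (rep X) - (R (nc_chi (Suc m) r) * R a + lin (\<lambda>q. R (nc_chi (Suc m) r) * h2 q) (rep X)) \<in> Idl (Suc (Suc m))"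
      using Id_add[OF 1 2] by (simp add: algebra_simps)
  qed
  also have "\<dots> = amul An1 (nc_chi (Suc m) r) (Psi p)"
  proof -
    have "amul An1 (nc_chi (Suc m) r) (Psi p) = cl (Suc (Suc m)) (R (nc_chi (Suc m) r) * (R a + lin h2 (rep X)))"
      using aX amul_cl[OF R_Fr[OF cr(1)] FS_add[OF R_Fr1[OF a(1)] lin_h2_Fr[OF fx]]] cl_R[OF cr(1)] by (simp add: Psi_cl)
    then show ?thesis by (simp add: lin_lmul distrib_left)
  qed
  finally show "Psi (lact RHS2 r p) = lact M12 r (Psi p)" by simp
next
  fix s p assume s: "s \<in> acarrier An" and p: "p \<in> mcarrier RHS2"
  obtain a X where aX: "p = (a, X)" by (cases p)
  have a: "a \<in> Acar (Suc m)" "X \<in> mcarrier T2" using p aX by auto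
  have fx: "rep X \<in> tz_free X2 D2" using carrier_tensor_E a(2) by blast
  have cs: "nc_chi (Suc m) s \<in> Acar (Suc (Suc m))" "R (nc_chi (Suc m) s) - R s \<in> Idl (Suc (Suc m))" using HC[OF s] by auto
  let ?f = "\<lambda>(b, c). (b, ract D2 c s)"
  have ff: "tz_map ?f (rep X) \<in> tz_free X2 D2"
    by (rule free_map[OF fx]) (use s HM in auto)
  have "Psi (ract RHS2 p s) = cl (Suc (Suc m)) (R (amul An a s) + lin (\<lambda>q. h2 (?f q)) (rep X))"
    using aX Psi_cls[OF ff] lin_map[OF fin_free[OF fx]] by simp
  also have "\<dots> = cl (Suc (Suc m)) (R a * R (nc_chi (Suc m) s) + lin (\<lambda>q. h2 q * R (nc_chi (Suc m) s)) (rep X))"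
  proof (rule cl_eqI)
    have 1: "R (amul An a s) - R a * R (nc_chi (Suc m) s) \<in> Idl (Suc (Suc m))"
    proof -
      have "(R (amul An a s) - R a * R s) - R a * (R (nc_chi (Suc m) s) - R s) \<in> Idl (Suc (Suc m))"
        by (rule Id_diff[OF Id1[OF conjunct2[OF HM[OF a(1) s]]] Id_lmul[OF R_Fr1[OF a(1)] cs(2)]])
      then show ?thesis by (simp add: algebra_simps)
    qed
    have 2: "lin (\<lambda>q. h2 (?f q)) (rep X) - lin (\<lambda>q. h2 q * R (nc_chi (Suc m) s)) (rep X) \<in> Idl (Suc (Suc m))"
    proof (rule lin_cong)
      fix q assume "q \<in> zsupp (rep X)"
      then have qc: "fst q \<in> Acar (Suc m)" "snd q \<in> Acar (Suc m)" using zsupp_car[OF fx] by auto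
      have "(R (fst q) * M [Suc m]) * (R (amul An (snd q) s) - R (snd q) * R s)
          - (R (fst q) * M [Suc m] * R (snd q)) * (R (nc_chi (Suc m) s) - R s) \<in> Idl (Suc (Suc m))"
        by (rule Id_diff[OF Id_lmul[OF FS_mult[OF R_Fr1[OF qc(1)] Mn_Fr] Id1[OF conjunct2[OF HM[OF qc(2) s]]]]
              Id_lmul[OF FS_mult[OF FS_mult[OF R_Fr1[OF qc(1)] Mn_Fr] R_Fr1[OF qc(2)]] cs(2)]])
      then show "h2 (?f q) - h2 q * R (nc_chi (Suc m) s) \<in> Idl (Suc (Suc m))"
        by (cases q) (simp add: h2_def algebra_simps)
    qed
    show "R (amul An a s) + lin (\<lambda>q. h2 (?f q)) (rep X) - (R a * R (nc_chi (Suc m) s) + lin (\<lambda>q. h2 q * R (nc_chi (Suc m) s)) (rep X)) \<in> Idl (Suc (Suc m))"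
      using Id_add[OF 1 2] by (simp add: algebra_simps)
  qed
  also have "\<dots> = amul An1 (Psi p) (nc_chi (Suc m) s)"
  proof -
    have "amul An1 (Psi p) (nc_chi (Suc m) s) = cl (Suc (Suc m)) ((R a + lin h2 (rep X)) * R (nc_chi (Suc m) s))"
      using aX amul_cl[OF FS_add[OF R_Fr1[OF a(1)] lin_h2_Fr[OF fx]] R_Fr[OF cs(1)]] cl_R[OF cs(1)] by (simp add: Psi_cl)
    then show ?thesis by (simp add: lin_rmul distrib_right)
  qed
  finally show "Psi (ract RHS2 p s) = ract M12 (Psi p) s" by simp
qed

end



lemma chi_R: "a \<in> Acar n \<Longrightarrow> nc_chi n a = cl (Suc n) (R a)"
  using chi_cl[OF R_Fr] cl_R by metis

lemma zero_bimod_simps[simp]: "mcarrier zero_bimod = {undefined}" "madd zero_bimod x y = undefined"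
  "lact zero_bimod r x = undefined" "ract zero_bimod x s = undefined"
  by (simp_all add: zero_bimod_def)

abbreviation "RHS0 \<equiv> dsum (regbimod (nilcox 0) id id) (zero_bimod :: (fa set, fa set, (fa set \<times> fa set \<Rightarrow> int) set) bimod)"

definition Psi0 :: "fa set \<times> (fa set \<times> fa set \<Rightarrow> int) set \<Rightarrow> fa set" where "Psi0 p = nc_chi 0 (fst p)"

lemma cl1_eq: "a \<in> Acar 0 \<Longrightarrow> b \<in> Acar 0 \<Longrightarrow> R a - R b \<in> Idl 0 \<Longrightarrow> cl 1 (R a) = cl 1 (R b)"
  using Id_Suc cl_eq by fastforce

lemma Psi0_iso: "bimod_iso (nilcox 0) (nilcox 0) RHS0 (regbimod (nilcox 1) (nc_chi 0) (nc_chi 0))"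
  unfolding bimod_iso_def
proof (intro exI[of _ Psi0] conjI ballI)
  have inj: "inj_on Psi0 (mcarrier RHS0)"
  proof (rule inj_onI)
    fix p p' assume p: "p \<in> mcarrier RHS0" and p': "p' \<in> mcarrier RHS0" and e: "Psi0 p = Psi0 p'"
    obtain a u where au: "p = (a, u)" by (cases p)
    obtain a' u' where au': "p' = (a', u')" by (cases p')
    have a: "a \<in> Acar 0" "u = undefined" using p au by auto
    have a': "a' \<in> Acar 0" "u' = undefined" using p' au' by auto
    have "cl 1 (R a) = cl 1 (R a')" using e au au' chi_R a a' by (simp add: Psi0_def)
    then have I: "R a - R a' \<in> Idl 1" using cl_eq_iff[of "R a'" 1 "R a"] R_Fr[OF a'(1)] Fr_Suc by auto
    have "(\<lambda>j. R a - R a') 1 \<in> Idl 0"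
    proof (rule K2[where n=0])
      show "\<forall>j\<in>{1..Suc 0}. R a - R a' \<in> Fr 0" using R_Fr a a' by blast
      show "(\<Sum>j\<in>{1..Suc 0}. (R a - R a') * M (wd j 0)) \<in> Idl (Suc 0)"
        using I by (simp add: wd_def M_Nil)
    qed simp
    then have "a = a'" using R_eq a a' by simp
    then show "p = p'" using au au' a a' by simp
  qed
  have surj: "Psi0 ` mcarrier RHS0 = mcarrier (regbimod (nilcox 1) (nc_chi 0) (nc_chi 0))"
  proof
    show "Psi0 ` mcarrier RHS0 \<subseteq> mcarrier (regbimod (nilcox 1) (nc_chi 0) (nc_chi 0))"
      using HC by (auto simp: Psi0_def)
    show "mcarrier (regbimod (nilcox 1) (nc_chi 0) (nc_chi 0)) \<subseteq> Psi0 ` mcarrier RHS0"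
    proof
      fix y assume "y \<in> mcarrier (regbimod (nilcox 1) (nc_chi 0) (nc_chi 0))"
      then have y: "y \<in> Acar (Suc 0)" by simp
      obtain g where g: "\<forall>j. g j \<in> Fr 0" "R y - (\<Sum>j\<in>{1..Suc 0}. g j * M (wd j 0)) \<in> Idl (Suc 0)"
        using K1[OF R_Fr[OF y]] unfolding spanned_def by blast
      have g1: "R y - g 1 \<in> Idl 1" using g(2) by (simp add: wd_def M_Nil)
      have "nc_chi 0 (cl 0 (g 1)) = cl 1 (g 1)" using chi_cl g by simp
      also have "\<dots> = cl 1 (R y)" using cl_eq[OF Id_sym[OF g1]] by simp
      also have "\<dots> = y" using cl_R y by simp
      finally have "Psi0 (cl 0 (g 1), undefined) = y" by (simp add: Psi0_def)
      moreover have "(cl 0 (g 1), undefined) \<in> mcarrier RHS0" using cl_in g by simp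
      ultimately show "y \<in> Psi0 ` mcarrier RHS0" by (metis image_eqI)
    qed
  qed
  show "bij_betw Psi0 (mcarrier RHS0) (mcarrier (regbimod (nilcox 1) (nc_chi 0) (nc_chi 0)))"
    unfolding bij_betw_def using inj surj by blast
next
  fix p p' assume p: "p \<in> mcarrier RHS0" and p': "p' \<in> mcarrier RHS0"
  obtain a u where au: "p = (a, u)" by (cases p)
  obtain a' u' where au': "p' = (a', u')" by (cases p')
  have a: "a \<in> Acar 0" using p au by auto
  have a': "a' \<in> Acar 0" using p' au' by auto
  have "nc_chi 0 (aadd (nilcox 0) a a') = cl 1 (R a + R a')"
    using chi_R[OF conjunct1[OF HA[OF a a']]] HA[OF a a'] Id_Suc cl_eq by fastforce
  also have "\<dots> = aadd (nilcox 1) (nc_chi 0 a) (nc_chi 0 a')"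
    using chi_R a a' aadd_cl[OF Fr_Suc[OF R_Fr[OF a]] Fr_Suc[OF R_Fr[OF a']]] by simp
  finally show "Psi0 (madd RHS0 p p') = madd (regbimod (nilcox 1) (nc_chi 0) (nc_chi 0)) (Psi0 p) (Psi0 p')"
    using au au' by (simp add: Psi0_def)
next
  fix r p assume r: "r \<in> acarrier (nilcox 0)" and p: "p \<in> mcarrier RHS0"
  obtain a u where au: "p = (a, u)" by (cases p)
  have a: "a \<in> Acar 0" using p au by auto
  have "nc_chi 0 (amul (nilcox 0) r a) = cl 1 (R r * R a)"
    using chi_R[OF conjunct1[OF HM[OF r a]]] HM[OF r a] Id_Suc cl_eq by fastforce
  also have "\<dots> = amul (nilcox 1) (nc_chi 0 r) (nc_chi 0 a)"
    using chi_R r a amul_cl[OF Fr_Suc[OF R_Fr[OF r]] Fr_Suc[OF R_Fr[OF a]]] by simp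
  finally show "Psi0 (lact RHS0 r p) = lact (regbimod (nilcox 1) (nc_chi 0) (nc_chi 0)) r (Psi0 p)"
    using au by (simp add: Psi0_def)
next
  fix s p assume s: "s \<in> acarrier (nilcox 0)" and p: "p \<in> mcarrier RHS0"
  obtain a u where au: "p = (a, u)" by (cases p)
  have a: "a \<in> Acar 0" using p au by auto
  have "nc_chi 0 (amul (nilcox 0) a s) = cl 1 (R a * R s)"
    using chi_R[OF conjunct1[OF HM[OF a s]]] HM[OF a s] Id_Suc cl_eq by fastforce
  also have "\<dots> = amul (nilcox 1) (nc_chi 0 a) (nc_chi 0 s)"
    using chi_R s a amul_cl[OF Fr_Suc[OF R_Fr[OF a]] Fr_Suc[OF R_Fr[OF s]]] by simp
  finally show "Psi0 (ract RHS0 p s) = ract (regbimod (nilcox 1) (nc_chi 0) (nc_chi 0)) (Psi0 p) s"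
    using au by (simp add: Psi0_def)
qed

lemma RHS0_sym: "bimod_iso (nilcox 0) (nilcox 0) (regbimod (nilcox 1) (nc_chi 0) (nc_chi 0)) RHS0"
  by (rule iso_sym[OF Psi0_iso]) (auto simp: HA HM)

lemma RHS2_sym: "bimod_iso (nilcox (Suc m)) (nilcox (Suc m))
   (regbimod (nilcox (Suc (Suc m))) (nc_chi (Suc m)) (nc_chi (Suc m)))
   (dsum (regbimod (nilcox (Suc m)) id id) (tensor (Xmod m) (nilcox m) (Dmod (Suc m))))"
proof (rule iso_sym[OF Psi_iso])
  fix x y assume x: "x \<in> mcarrier (dsum (regbimod (nilcox (Suc m)) id id) (tensor (Xmod m) (nilcox m) (Dmod (Suc m))))"
    and y: "y \<in> mcarrier (dsum (regbimod (nilcox (Suc m)) id id) (tensor (Xmod m) (nilcox m) (Dmod (Suc m))))"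
  obtain a X where aX: "x = (a, X)" by (cases x)
  obtain b Y where bY: "y = (b, Y)" by (cases y)
  have fx: "rep X \<in> tz_free (Xmod m) (Dmod (Suc m))" using carrier_tensor_E[of X "Xmod m" "nilcox m" "Dmod (Suc m)"] x aX by simp
  have fy: "rep Y \<in> tz_free (Xmod m) (Dmod (Suc m))" using carrier_tensor_E[of Y "Xmod m" "nilcox m" "Dmod (Suc m)"] y bY by simp
  show "madd (dsum (regbimod (nilcox (Suc m)) id id) (tensor (Xmod m) (nilcox m) (Dmod (Suc m)))) x y
      \<in> mcarrier (dsum (regbimod (nilcox (Suc m)) id id) (tensor (Xmod m) (nilcox m) (Dmod (Suc m))))"
    using aX bY x y HA free_add[OF fx fy] by auto
next
  fix r x assume r: "r \<in> acarrier (nilcox (Suc m))"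
    and x: "x \<in> mcarrier (dsum (regbimod (nilcox (Suc m)) id id) (tensor (Xmod m) (nilcox m) (Dmod (Suc m))))"
  obtain a X where aX: "x = (a, X)" by (cases x)
  have fx: "rep X \<in> tz_free (Xmod m) (Dmod (Suc m))" using carrier_tensor_E[of X "Xmod m" "nilcox m" "Dmod (Suc m)"] x aX by simp
  have "tz_map (\<lambda>(b, c). (lact (Xmod m) r b, c)) (rep X) \<in> tz_free (Xmod m) (Dmod (Suc m))"
    by (rule free_map[OF fx]) (use r HM in auto)
  then show "lact (dsum (regbimod (nilcox (Suc m)) id id) (tensor (Xmod m) (nilcox m) (Dmod (Suc m)))) r x
      \<in> mcarrier (dsum (regbimod (nilcox (Suc m)) id id) (tensor (Xmod m) (nilcox m) (Dmod (Suc m))))"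
    using aX x r HM by auto
next
  fix s x assume s: "s \<in> acarrier (nilcox (Suc m))"
    and x: "x \<in> mcarrier (dsum (regbimod (nilcox (Suc m)) id id) (tensor (Xmod m) (nilcox m) (Dmod (Suc m))))"
  obtain a X where aX: "x = (a, X)" by (cases x)
  have fx: "rep X \<in> tz_free (Xmod m) (Dmod (Suc m))" using carrier_tensor_E[of X "Xmod m" "nilcox m" "Dmod (Suc m)"] x aX by simp
  have "tz_map (\<lambda>(b, c). (b, ract (Dmod (Suc m)) c s)) (rep X) \<in> tz_free (Xmod m) (Dmod (Suc m))"
    by (rule free_map[OF fx]) (use s HM in auto)
  then show "ract (dsum (regbimod (nilcox (Suc m)) id id) (tensor (Xmod m) (nilcox m) (Dmod (Suc m)))) x s
      \<in> mcarrier (dsum (regbimod (nilcox (Suc m)) id id) (tensor (Xmod m) (nilcox m) (Dmod (Suc m))))"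
    using aX x s HM by auto
qed

theorem mainTheorem6:
  fixes n :: nat
  shows "bimod_iso (nilcox n) (nilcox n)
           (tensor (Dmod (Suc n)) (nilcox (Suc n)) (Xmod n))
           (dsum (regbimod (nilcox n) id id)
              (if n = 0 then zero_bimod
               else tensor (Xmod (n - 1)) (nilcox (n - 1)) (Dmod n)))"
proof (cases n)
  case 0
  then show ?thesis using iso_trans[OF Phi_iso[of 0] RHS0_sym[unfolded One_nat_def]] by simp
next
  case (Suc m)
  then show ?thesis using iso_trans[OF Phi_iso[of "Suc m"] RHS2_sym[of m]] by simp
qed


end
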